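(* Let $\gamma\in(0,1)$. There is a constant $c_2>0$, a polynomial in $\|D_x\|_\infty,\|D_u\|_\infty,\kappa,\kappa_B,\gamma^{-1},\bar w,G$ (independent of $n,m,H,\eta,t$), such that with $\epsilon_2(\eta,H)=c_2\eta n^2\sqrt mH^2$ the following holds. Let $H\ge\frac{\log(2\kappa^2)}{\log((1-\gamma)^{-1})}$, let $\epsilon$ be such that $\Omega_\epsilon\ne\emptyset$, and let $\{\bm M_t\}_{t=0}^T$ be the policies generated by OGD-BZ with constant stepsize $\eta>0$. Then for all $t$, $$\max_{1\le i\le k_x}|\mathring g^x_i(\bm M_t)-g^x_i(\bm M_{t-H+1:t})|\le\epsilon_2(\eta,H),\qquad\max_{1\le j\le k_u}|\mathring g^u_j(\bm M_t)-g^u_j(\bm M_{t-H:t})|\le\epsilon_2(\eta,H).$$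
   Context: System $x_{t+1}=Ax_t+Bu_t+w_t$, $A\in\mathbb R^{n\times n}$, $B\in\mathbb R^{n\times m}$, $x_0=0$, $w_t$ i.i.d. with $\|w_t\|_\infty\le\bar w$, $\bar w>0$. $D_x\in\mathbb R^{k_x\times n}$, $d_x\in\mathbb R^{k_x}$, $D_u\in\mathbb R^{k_u\times m}$, $d_u\in\mathbb R^{k_u}$, rows $D_{x,i}^\top$, $D_{u,j}^\top$; matrix $\|\cdot\|_\infty$ = max absolute row sum, $\|\cdot\|_2$ = spectral norm. Costs $c_t$ convex, differentiable, with $G>0$ such that $\|\nabla_xc_t(x,u)\|_2,\|\nabla_uc_t(x,u)\|_2\le Gb$ whenever $\|x\|_2,\|u\|_2\le b$. $K$ is $(\kappa,\gamma)$-strongly stable ($\kappa\ge1$) if $A-BK=Q^{-1}LQ$ with $\|L\|_2\le1-\gamma$, $\max(\|Q\|_2,\|Q^{-1}\|_2,\|K\|_2)\le\kappa$; $\kappa_B=\max(\|B\|_2,1)$. Fix a $(\kappa,\gamma)$-strongly stable $\mathbb K$, $A_{\mathbb K}=A-B\mathbb K$. Parameters $\bm M=(M^{[1]},\dots,M^{[H]})$, $M^{[i]}\in\mathbb R^{m\times n}$; $\mathcal M=\{\bm M:\|M^{[i]}\|_\infty\le2\sqrt n\kappa^3(1-\gamma)^{i-1}\}$; $\|\bm M\|_F$ is the Frobenius norm of all entries. $\Phi^x_k(\bm M_{t-H:t-1})=A_{\mathbb K}^{k-1}\mathds1_{(k\le H)}+\sum_{i=1}^HA_{\mathbb K}^{i-1}BM_{t-i}^{[k-i]}\mathds1_{(1\le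 k-i\le H)}$, $\Phi^u_k(\bm M_{t-H:t})=M_t^{[k]}\mathds1_{(k\le H)}-\mathbb K\Phi^x_k(\bm M_{t-H:t-1})$, $k=1,\dots,2H$. $g^x_i(\bm M_{t-H+1:t})=\bar w\sum_{k=1}^{2H}\|D_{x,i}^\top\Phi^x_k(\bm M_{t-H+1:t})\|_1$ ($\Phi^x_k$ with $t$ replaced by $t+1$), $g^u_j(\bm M_{t-H:t})=\bar w\sum_{k=1}^{2H}\|D_{u,j}^\top\Phi^u_k(\bm M_{t-H:t})\|_1$; $\mathring g^x_i(\bm M)=g^x_i(\bm M,\dots,\bm M)$, $\mathring g^u_j(\bm M)=g^u_j(\bm M,\dots,\bm M)$. $\Omega_\epsilon=\{\bm M\in\mathcal M:\mathring g^x_i(\bm M)\le d_{x,i}-\epsilon\ \forall i,\ \mathring g^u_j(\bm M)\le d_{u,j}-\epsilon\ \forall j\}$. With $\tilde x_t=\sum_{k=1}^{2H}\Phi^x_k(\bm M_{t-H:t-1})w_{t-k}$, $\tilde u_t=\sum_{k=1}^{2H}\Phi^u_k(\bm M_{t-H:t})w_{t-k}$ ($w_s=0$ for $s<0$), $\mathring f_t(\bm M)=\mathbb E[c_t(\tilde x_t,\tilde u_t)]$ with all $\bm M_s=\bm M$. OGD-BZ: pick $\bm M_0\in\Omega_\epsilon$; for $t=0,\dots,T$ apply $u_t=-\mathbb Kx_t+\sum_iM_t^{[i]}w_{t-i}$, observe $x_{t+1}$, record $w_t$, set $\bm M_{t+1}=\Pi_{\Omega_\epsilon}[\bm M_t-\eta\nabla\mathring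 f_t(\bm M_t)]$ (Frobenius projection). Convention: $\bm M_s=\bm M_0$ for $s<0$. *)

theory Defs
  imports "HOL-Probability.Probability"
begin

text \<open>Dimensions are explicit natural numbers (the polynomial constant
must be uniform in n, m, so dimensions cannot be type-indexed). A vector in R^d is a
function nat => real of which only the coordinates 0..d-1 are used; an r x c matrix is
a function nat => nat => real of which only the entries (i,j) with i<r, j<c are used.
A parameter M = (M^[1],...,M^[H]) is a function M i a b = (M^[i])_(a,b),
1 <= i <= H, a < m, b < n.\<close>

type_synonym vecr = "nat \<Rightarrow> real"
type_synonym matr = "nat \<Rightarrow> nat \<Rightarrow> real"
type_synonym param = "nat \<Rightarrow> nat \<Rightarrow> nat \<Rightarrow> real"

definition mmul :: "nat \<Rightarrow> matr \<Rightarrow> matr \<Rightarrow> matr" where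
  "mmul k X Y = (\<lambda>i j. \<Sum>l<k. X i l * Y l j)"

definition mid :: matr where
  "mid = (\<lambda>i j. if i = j then 1 else 0)"

fun mpow :: "nat \<Rightarrow> matr \<Rightarrow> nat \<Rightarrow> matr" where
  "mpow n X 0 = mid"
| "mpow n X (Suc k) = mmul n X (mpow n X k)"

definition mvmul :: "nat \<Rightarrow> matr \<Rightarrow> vecr \<Rightarrow> vecr" where
  "mvmul c X x = (\<lambda>i. \<Sum>j<c. X i j * x j)"

definition vnorm2 :: "nat \<Rightarrow> vecr \<Rightarrow> real" where
  "vnorm2 d x = sqrt (\<Sum>i<d. (x i)^2)"

definition spec_norm :: "nat \<Rightarrow> nat \<Rightarrow> matr \<Rightarrow> real" where
  "spec_norm r c X = Sup ((\<lambda>x. vnorm2 r (mvmul c X x)) ` {x. vnorm2 c x \<le> 1})"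

definition inf_norm :: "nat \<Rightarrow> nat \<Rightarrow> matr \<Rightarrow> real" where
  "inf_norm r c X = Max (insert 0 ((\<lambda>i. \<Sum>j<c. \<bar>X i j\<bar>) ` {..<r}))"

definition strongly_stable ::
  "nat \<Rightarrow> nat \<Rightarrow> matr \<Rightarrow> matr \<Rightarrow> real \<Rightarrow> real \<Rightarrow> matr \<Rightarrow> bool" where
  "strongly_stable n m A B \<kappa> \<gamma> K \<longleftrightarrow>
     (\<exists>Q Qi L.
        (\<forall>i<n. \<forall>j<n. mmul n Q Qi i j = mid i j \<and> mmul n Qi Q i j = mid i j) \<and>
        (\<forall>i<n. \<forall>j<n. A i j - mmul m B K i j = mmul n (mmul n Qi L) Q i j) \<and>
        spec_norm n n L \<le> 1 - \<gamma> \<and>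
        spec_norm n n Q \<le> \<kappa> \<and> spec_norm n n Qi \<le> \<kappa> \<and> spec_norm m n K \<le> \<kappa>)"

definition closed_loop :: "nat \<Rightarrow> matr \<Rightarrow> matr \<Rightarrow> matr \<Rightarrow> matr" where
  "closed_loop m A B K = (\<lambda>i j. A i j - mmul m B K i j)"

text \<open>Phi^x_k and Phi^u_k. hist s is the parameter M_s at (integer) time s.\<close>
definition Phix :: "nat \<Rightarrow> nat \<Rightarrow> nat \<Rightarrow> matr \<Rightarrow> matr \<Rightarrow> (int \<Rightarrow> param) \<Rightarrow> int \<Rightarrow> nat \<Rightarrow> matr" where
  "Phix n m H AK B hist t k = (\<lambda>r b.
      (if k \<le> H then mpow n AK (k - 1) r b else 0)
    + (\<Sum>i\<in>{1..H}. if i < k \<and> k - i \<le> H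
          then mmul m (mmul n (mpow n AK (i - 1)) B) (hist (t - int i) (k - i)) r b
          else 0))"

definition Phiu :: "nat \<Rightarrow> nat \<Rightarrow> nat \<Rightarrow> matr \<Rightarrow> matr \<Rightarrow> matr \<Rightarrow> (int \<Rightarrow> param) \<Rightarrow> int \<Rightarrow> nat \<Rightarrow> matr" where
  "Phiu n m H AK B K hist t k = (\<lambda>a b.
      (if k \<le> H then hist t k a b else 0) - mmul n K (Phix n m H AK B hist t k) a b)"

text \<open>g^x_i(M_{t-H+1:t}) (Phi^x with t replaced by t+1) and g^u_j(M_{t-H:t}).\<close>
definition gx :: "nat \<Rightarrow> nat \<Rightarrow> nat \<Rightarrow> matr \<Rightarrow> matr \<Rightarrow> real \<Rightarrow> matr \<Rightarrow> (int \<Rightarrow> param) \<Rightarrow> int \<Rightarrow> nat \<Rightarrow> real" where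
  "gx n m H AK B wbar Dx hist t i =
     wbar * (\<Sum>k\<in>{1..2*H}. \<Sum>b<n. \<bar>\<Sum>l<n. Dx i l * Phix n m H AK B hist (t + 1) k l b\<bar>)"

definition gu :: "nat \<Rightarrow> nat \<Rightarrow> nat \<Rightarrow> matr \<Rightarrow> matr \<Rightarrow> matr \<Rightarrow> real \<Rightarrow> matr \<Rightarrow> (int \<Rightarrow> param) \<Rightarrow> int \<Rightarrow> nat \<Rightarrow> real" where
  "gu n m H AK B K wbar Du hist t j =
     wbar * (\<Sum>k\<in>{1..2*H}. \<Sum>b<n. \<bar>\<Sum>a<m. Du j a * Phiu n m H AK B K hist t k a b\<bar>)"

text \<open>History of a policy sequence with the convention M_s = M_0 for s < 0.\<close>
definition histof :: "(nat \<Rightarrow> param) \<Rightarrow> int \<Rightarrow> param" where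
  "histof Ms = (\<lambda>s. Ms (nat s))"

definition valid_param :: "nat \<Rightarrow> nat \<Rightarrow> nat \<Rightarrow> param \<Rightarrow> bool" where
  "valid_param H m n M \<longleftrightarrow> (\<forall>i a b. M i a b \<noteq> 0 \<longrightarrow> 1 \<le> i \<and> i \<le> H \<and> a < m \<and> b < n)"

definition Mset :: "nat \<Rightarrow> nat \<Rightarrow> nat \<Rightarrow> real \<Rightarrow> real \<Rightarrow> param set" where
  "Mset n m H \<kappa> \<gamma> = {M. valid_param H m n M \<and>
      (\<forall>i\<in>{1..H}. inf_norm m n (M i) \<le> 2 * sqrt (real n) * \<kappa>^3 * (1 - \<gamma>)^(i - 1))}"

definition Omega :: "nat \<Rightarrow> nat \<Rightarrow> nat \<Rightarrow> nat \<Rightarrow> nat \<Rightarrow> matr \<Rightarrow> matr \<Rightarrow> matr \<Rightarrow> real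
     \<Rightarrow> matr \<Rightarrow> vecr \<Rightarrow> matr \<Rightarrow> vecr \<Rightarrow> real \<Rightarrow> real \<Rightarrow> real \<Rightarrow> param set" where
  "Omega n m kx ku H AK B K wbar Dx dx Du du \<kappa> \<gamma> \<epsilon> =
     {M \<in> Mset n m H \<kappa> \<gamma>.
        (\<forall>i<kx. gx n m H AK B wbar Dx (\<lambda>_. M) 0 i \<le> dx i - \<epsilon>) \<and>
        (\<forall>j<ku. gu n m H AK B K wbar Du (\<lambda>_. M) 0 j \<le> du j - \<epsilon>)}"

definition frob_dist :: "nat \<Rightarrow> nat \<Rightarrow> nat \<Rightarrow> param \<Rightarrow> param \<Rightarrow> real" where
  "frob_dist H m n M M' = sqrt (\<Sum>i\<in>{1..H}. \<Sum>a<m. \<Sum>b<n. (M i a b - M' i a b)^2)"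

definition proj_onto :: "nat \<Rightarrow> nat \<Rightarrow> nat \<Rightarrow> param set \<Rightarrow> param \<Rightarrow> param \<Rightarrow> bool" where
  "proj_onto H m n S y z \<longleftrightarrow> z \<in> S \<and> (\<forall>z'\<in>S. frob_dist H m n z y \<le> frob_dist H m n z' y)"

text \<open>Noise: omega t is the realisation of w_t; w_s = 0 for s < 0.\<close>
definition noise :: "(nat \<Rightarrow> vecr) \<Rightarrow> int \<Rightarrow> vecr" where
  "noise \<omega> s = (if s < 0 then (\<lambda>_. 0) else \<omega> (nat s))"

definition vecM :: "(nat \<Rightarrow> real) measure" where
  "vecM = Pi\<^sub>M UNIV (\<lambda>_. (borel :: real measure))"

definition noise_model :: "nat \<Rightarrow> real \<Rightarrow> (nat \<Rightarrow> vecr) measure \<Rightarrow> bool" where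
  "noise_model n wbar P \<longleftrightarrow>
     prob_space P \<and> sets P = sets (Pi\<^sub>M UNIV (\<lambda>_. vecM)) \<and>
     prob_space.indep_vars P (\<lambda>_. vecM) (\<lambda>t \<omega>. \<omega> t) UNIV \<and>
     (\<forall>t. distr P vecM (\<lambda>\<omega>. \<omega> t) = distr P vecM (\<lambda>\<omega>. \<omega> 0)) \<and>
     (AE \<omega> in P. \<forall>t. \<forall>b<n. \<bar>\<omega> t b\<bar> \<le> wbar)"

definition xtil :: "nat \<Rightarrow> nat \<Rightarrow> nat \<Rightarrow> matr \<Rightarrow> matr \<Rightarrow> param \<Rightarrow> int \<Rightarrow> (nat \<Rightarrow> vecr) \<Rightarrow> vecr" where
  "xtil n m H AK B M t \<omega> = (\<lambda>r. \<Sum>k\<in>{1..2*H}. \<Sum>b<n.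
       Phix n m H AK B (\<lambda>_. M) t k r b * noise \<omega> (t - int k) b)"

definition util :: "nat \<Rightarrow> nat \<Rightarrow> nat \<Rightarrow> matr \<Rightarrow> matr \<Rightarrow> matr \<Rightarrow> param \<Rightarrow> int \<Rightarrow> (nat \<Rightarrow> vecr) \<Rightarrow> vecr" where
  "util n m H AK B K M t \<omega> = (\<lambda>a. \<Sum>k\<in>{1..2*H}. \<Sum>b<n.
       Phiu n m H AK B K (\<lambda>_. M) t k a b * noise \<omega> (t - int k) b)"

definition fring :: "(nat \<Rightarrow> vecr) measure \<Rightarrow> (nat \<Rightarrow> vecr \<Rightarrow> vecr \<Rightarrow> real) \<Rightarrow> nat \<Rightarrow> nat \<Rightarrow> nat
     \<Rightarrow> matr \<Rightarrow> matr \<Rightarrow> matr \<Rightarrow> nat \<Rightarrow> param \<Rightarrow> real" where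
  "fring P c n m H AK B K t M =
     (\<integral>\<omega>. c t (xtil n m H AK B M (int t) \<omega>) (util n m H AK B K M (int t) \<omega>) \<partial>P)"

definition pgrad :: "nat \<Rightarrow> nat \<Rightarrow> nat \<Rightarrow> (param \<Rightarrow> real) \<Rightarrow> param \<Rightarrow> param \<Rightarrow> bool" where
  "pgrad H m n f M g \<longleftrightarrow> valid_param H m n g \<and>
     (\<forall>i\<in>{1..H}. \<forall>a<m. \<forall>b<n.
        ((\<lambda>s. f (\<lambda>i' a' b'. M i' a' b' + (if i' = i \<and> a' = a \<and> b' = b then s else 0)))
           has_real_derivative g i a b) (at 0))"

definition has_grad :: "nat \<Rightarrow> nat \<Rightarrow> (vecr \<Rightarrow> vecr \<Rightarrow> real) \<Rightarrow> vecr \<Rightarrow> vecr \<Rightarrow> vecr \<Rightarrow> vecr \<Rightarrow> bool" where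
  "has_grad n m f x u gx' gu' \<longleftrightarrow>
     (\<forall>e>0. \<exists>d>0. \<forall>h k. sqrt ((vnorm2 n h)^2 + (vnorm2 m k)^2) < d \<longrightarrow>
        \<bar>f (\<lambda>i. x i + h i) (\<lambda>j. u j + k j) - f x u - (\<Sum>i<n. gx' i * h i) - (\<Sum>j<m. gu' j * k j)\<bar>
          \<le> e * sqrt ((vnorm2 n h)^2 + (vnorm2 m k)^2))"

definition cost_model :: "nat \<Rightarrow> nat \<Rightarrow> real \<Rightarrow> (nat \<Rightarrow> vecr \<Rightarrow> vecr \<Rightarrow> real) \<Rightarrow> bool" where
  "cost_model n m G c \<longleftrightarrow>
     (\<forall>t x x' u u'. (\<forall>i<n. x i = x' i) \<and> (\<forall>j<m. u j = u' j) \<longrightarrow> c t x u = c t x' u') \<and>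
     (\<forall>t x u x' u' \<theta>. 0 \<le> \<theta> \<and> \<theta> \<le> 1 \<longrightarrow>
        c t (\<lambda>i. \<theta> * x i + (1 - \<theta>) * x' i) (\<lambda>j. \<theta> * u j + (1 - \<theta>) * u' j)
          \<le> \<theta> * c t x u + (1 - \<theta>) * c t x' u') \<and>
     (\<forall>t x u. \<exists>gx' gu'. has_grad n m (c t) x u gx' gu') \<and>
     (\<forall>t x u gx' gu' b. has_grad n m (c t) x u gx' gu' \<and> vnorm2 n x \<le> b \<and> vnorm2 m u \<le> b
        \<longrightarrow> vnorm2 n gx' \<le> G * b \<and> vnorm2 m gu' \<le> G * b)"

definition ogd_bz :: "(nat \<Rightarrow> param \<Rightarrow> real) \<Rightarrow> nat \<Rightarrow> nat \<Rightarrow> nat \<Rightarrow> param set \<Rightarrow> real \<Rightarrow> nat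
     \<Rightarrow> (nat \<Rightarrow> param) \<Rightarrow> bool" where
  "ogd_bz f H m n Om \<eta> T Ms \<longleftrightarrow> Ms 0 \<in> Om \<and>
     (\<forall>t\<le>T. \<exists>g. pgrad H m n (f t) (Ms t) g \<and>
        proj_onto H m n Om (\<lambda>i a b. Ms t i a b - \<eta> * g i a b) (Ms (Suc t)))"

text \<open>Real multivariate polynomial as a list of (coefficient, exponent list) monomials.\<close>
definition peval :: "(real \<times> nat list) list \<Rightarrow> real list \<Rightarrow> real" where
  "peval p xs = (\<Sum>(c, es) \<leftarrow> p. c * (\<Prod>i<length xs. (xs ! i) ^ (if i < length es then es ! i else 0)))"

end

theory Submission
  imports Defs
begin

lemma vnorm2_L2: "vnorm2 d x = L2_set x {..<d}"
  by (simp add: vnorm2_def L2_set_def)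

lemma vnorm2_nonneg[simp]: "0 \<le> vnorm2 d x"
  by (simp add: vnorm2_def sum_nonneg)

lemma vnorm2_cong: "(\<And>i. i<d \<Longrightarrow> x i = y i) \<Longrightarrow> vnorm2 d x = vnorm2 d y"
  unfolding vnorm2_def by (metis (no_types, lifting) lessThan_iff sum.cong)

lemma vnorm2_add: "vnorm2 d (\<lambda>i. x i + y i) \<le> vnorm2 d x + vnorm2 d y"
  unfolding vnorm2_L2 by (rule L2_set_triangle_ineq)

lemma vnorm2_scale: "vnorm2 d (\<lambda>i. a * x i) = \<bar>a\<bar> * vnorm2 d x"
  unfolding vnorm2_def by (simp add: power_mult_distrib sum_distrib_left[symmetric] real_sqrt_mult)

lemma vnorm2_minus: "vnorm2 d (\<lambda>i. - x i) = vnorm2 d x"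
  unfolding vnorm2_def by simp

lemma vnorm2_diff_sym: "vnorm2 d (\<lambda>i. x i - y i) = vnorm2 d (\<lambda>i. y i - x i)"
  unfolding vnorm2_def by (simp add: power2_commute)

lemma vnorm2_diff: "vnorm2 d (\<lambda>i. x i - y i) \<le> vnorm2 d x + vnorm2 d y"
  using vnorm2_add[of d x "\<lambda>i. - y i"] by (simp add: vnorm2_minus)

lemma vnorm2_sum: "finite J \<Longrightarrow> vnorm2 d (\<lambda>i. \<Sum>j\<in>J. f j i) \<le> (\<Sum>j\<in>J. vnorm2 d (f j))"
proof (induction J rule: finite_induct)
  case empty
  then show ?case by (simp add: vnorm2_def)
next
  case (insert a F)
  have "vnorm2 d (\<lambda>i. \<Sum>j\<in>insert a F. f j i) = vnorm2 d (\<lambda>i. f a i + (\<Sum>j\<in>F. f j i))"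
    using insert by simp
  also have "\<dots> \<le> vnorm2 d (f a) + vnorm2 d (\<lambda>i. \<Sum>j\<in>F. f j i)"
    by (rule vnorm2_add)
  also have "\<dots> \<le> vnorm2 d (f a) + (\<Sum>j\<in>F. vnorm2 d (f j))" using insert by simp
  finally show ?case using insert by simp
qed

lemma abs_le_vnorm2: "i<d \<Longrightarrow> \<bar>x i\<bar> \<le> vnorm2 d x"
  unfolding vnorm2_L2 using member_le_L2_set[of "{..<d}" i "\<lambda>i. \<bar>x i\<bar>"]
  by (simp add: L2_set_def)

lemma vnorm2_le_bound:
  assumes "\<And>i. i<d \<Longrightarrow> \<bar>x i\<bar> \<le> w" "0 \<le> w"
  shows "vnorm2 d x \<le> sqrt (real d) * w"
proof -
  have "(\<Sum>i<d. (x i)^2) \<le> (\<Sum>i<d. w^2)"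
    by (intro sum_mono) (metis abs_le_square_iff abs_of_nonneg assms lessThan_iff)
  then have "vnorm2 d x \<le> sqrt (real d * w^2)" unfolding vnorm2_def by simp
  then show ?thesis using assms(2) by (simp add: real_sqrt_mult)
qed

lemma vnorm2_zero: "vnorm2 d x = 0 \<Longrightarrow> i < d \<Longrightarrow> x i = 0"
  using abs_le_vnorm2[of i d x] by simp

lemma inner_le_vnorm2: "\<bar>\<Sum>i<d. x i * y i\<bar> \<le> vnorm2 d x * vnorm2 d y"
proof -
  have "\<bar>\<Sum>i<d. x i * y i\<bar> \<le> (\<Sum>i<d. \<bar>x i\<bar> * \<bar>y i\<bar>)"
    by (metis (no_types, lifting) abs_mult sum.cong sum_abs)
  also have "\<dots> \<le> vnorm2 d x * vnorm2 d y"
    unfolding vnorm2_L2 by (rule L2_set_mult_ineq)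
  finally show ?thesis .
qed

lemma sum_le_sqrt_card: "(\<Sum>i\<in>A. \<bar>f i\<bar>) \<le> sqrt (real (card A)) * L2_set f A"
proof -
  have "(\<Sum>i\<in>A. \<bar>f i\<bar>) = (\<Sum>i\<in>A. \<bar>f i\<bar> * \<bar>(\<lambda>_. 1::real) i\<bar>)" by simp
  also have "\<dots> \<le> L2_set f A * L2_set (\<lambda>_. 1::real) A" by (rule L2_set_mult_ineq)
  also have "\<dots> = sqrt (real (card A)) * L2_set f A" by (simp add: L2_set_constant)
  finally show ?thesis .
qed

definition opb :: "nat \<Rightarrow> nat \<Rightarrow> matr \<Rightarrow> real \<Rightarrow> bool" where
  "opb r c X \<beta> \<longleftrightarrow> (\<forall>x. vnorm2 r (mvmul c X x) \<le> \<beta> * vnorm2 c x)"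

definition frobm :: "nat \<Rightarrow> nat \<Rightarrow> matr \<Rightarrow> real" where
  "frobm r c X = sqrt (\<Sum>i<r. \<Sum>j<c. (X i j)^2)"

lemma mvmul_frob: "vnorm2 r (mvmul c X x) \<le> frobm r c X * vnorm2 c x"
proof -
  have "\<And>i. (mvmul c X x i)^2 \<le> (\<Sum>j<c. (X i j)^2) * (\<Sum>j<c. (x j)^2)"
  proof -
    fix i
    have "\<bar>mvmul c X x i\<bar> \<le> vnorm2 c (X i) * vnorm2 c x"
      unfolding mvmul_def by (rule inner_le_vnorm2)
    then have "(mvmul c X x i)^2 \<le> (vnorm2 c (X i) * vnorm2 c x)^2"
      by (metis abs_ge_zero power2_abs power_mono)
    also have "\<dots> = (\<Sum>j<c. (X i j)^2) * (\<Sum>j<c. (x j)^2)"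
      unfolding vnorm2_def by (simp add: power_mult_distrib sum_nonneg)
    finally show "(mvmul c X x i)^2 \<le> (\<Sum>j<c. (X i j)^2) * (\<Sum>j<c. (x j)^2)" .
  qed
  then have "(\<Sum>i<r. (mvmul c X x i)^2) \<le> (\<Sum>i<r. (\<Sum>j<c. (X i j)^2) * (\<Sum>j<c. (x j)^2))"
    by (intro sum_mono) auto
  also have "\<dots> = (\<Sum>i<r. \<Sum>j<c. (X i j)^2) * (\<Sum>j<c. (x j)^2)"
    by (simp add: sum_distrib_right)
  finally show ?thesis unfolding vnorm2_def frobm_def
    by (metis real_sqrt_le_mono real_sqrt_mult)
qed

lemma mvmul_cong: "(\<And>j. j<c \<Longrightarrow> x j = y j) \<Longrightarrow> mvmul c X x = mvmul c X y"
  unfolding mvmul_def by (intro ext sum.cong) auto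

lemma mvmul_cong_mat: "(\<And>j. j<c \<Longrightarrow> X i j = Y i j) \<Longrightarrow> mvmul c X x i = mvmul c Y x i"
  unfolding mvmul_def by (intro sum.cong) auto

lemma spec_norm_opb: "opb r c X (spec_norm r c X)"
  unfolding opb_def
proof
  fix x
  let ?S = "(\<lambda>x. vnorm2 r (mvmul c X x)) ` {x. vnorm2 c x \<le> 1}"
  have bdd: "bdd_above ?S"
  proof (rule bdd_aboveI)
    fix y assume "y \<in> ?S"
    then obtain z where z: "vnorm2 c z \<le> 1" "y = vnorm2 r (mvmul c X z)" by auto
    have "y \<le> frobm r c X * vnorm2 c z" using z mvmul_frob by simp
    also have "\<dots> \<le> frobm r c X" using z(1)
      by (simp add: frobm_def mult_left_le sum_nonneg)
    finally show "y \<le> frobm r c X" .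
  qed
  show "vnorm2 r (mvmul c X x) \<le> spec_norm r c X * vnorm2 c x"
  proof (cases "vnorm2 c x = 0")
    case True
    then have "mvmul c X x = mvmul c X (\<lambda>_. 0)"
      by (intro mvmul_cong) (simp add: vnorm2_zero)
    then have "vnorm2 r (mvmul c X x) = 0" by (simp add: mvmul_def vnorm2_def)
    then show ?thesis using True by simp
  next
    case False
    define \<nu> where "\<nu> = vnorm2 c x"
    have pos: "\<nu> > 0" using False \<nu>_def vnorm2_nonneg
      by (metis order_le_less)
    define y where "y = (\<lambda>j. (1/\<nu>) * x j)"
    have "vnorm2 c y = 1" unfolding y_def vnorm2_scale using pos \<nu>_def by simp
    then have "vnorm2 r (mvmul c X y) \<in> ?S" by auto
    then have le: "vnorm2 r (mvmul c X y) \<le> spec_norm r c X"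
      unfolding spec_norm_def using bdd by (rule cSup_upper)
    have "mvmul c X y = (\<lambda>i. (1/\<nu>) * mvmul c X x i)"
      unfolding y_def mvmul_def by (simp add: sum_distrib_left ac_simps)
    then have "vnorm2 r (mvmul c X y) = \<bar>1/\<nu>\<bar> * vnorm2 r (mvmul c X x)"
      by (simp only: vnorm2_scale)
    then have "vnorm2 r (mvmul c X x) = \<nu> * vnorm2 r (mvmul c X y)"
      using pos by (simp add: field_simps)
    also have "\<dots> \<le> \<nu> * spec_norm r c X" using le pos by (intro mult_left_mono) auto
    finally show ?thesis using \<nu>_def by (simp add: ac_simps)
  qed
qed

lemma opb_mono: "opb r c X \<beta> \<Longrightarrow> \<beta> \<le> \<beta>' \<Longrightarrow> opb r c X \<beta>'"
  unfolding opb_def by (meson mult_right_mono order_trans vnorm2_nonneg)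

lemma opbD: "opb r c X \<beta> \<Longrightarrow> vnorm2 r (mvmul c X x) \<le> \<beta> * vnorm2 c x"
  unfolding opb_def by blast

lemma mvmul_mmul: "mvmul c (mmul k X Y) x = mvmul k X (mvmul c Y x)"
proof
  fix i
  have "(\<Sum>j<c. (\<Sum>l<k. X i l * Y l j) * x j) = (\<Sum>j<c. \<Sum>l<k. X i l * (Y l j * x j))"
    by (simp add: sum_distrib_right mult.assoc)
  also have "\<dots> = (\<Sum>l<k. \<Sum>j<c. X i l * (Y l j * x j))" by (rule sum.swap)
  also have "\<dots> = (\<Sum>l<k. X i l * (\<Sum>j<c. Y l j * x j))" by (simp add: sum_distrib_left)
  finally show "mvmul c (mmul k X Y) x i = mvmul k X (mvmul c Y x) i"
    unfolding mvmul_def mmul_def .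
qed

lemma mvmul_mid: "i < c \<Longrightarrow> mvmul c mid x i = x i"
proof -
  have "(\<Sum>j<c. mid i j * x j) = (\<Sum>j<c. if i = j then x j else 0)"
    by (rule sum.cong) (auto simp: mid_def)
  then show "i < c \<Longrightarrow> mvmul c mid x i = x i" unfolding mvmul_def by (simp add: sum.delta')
qed

lemma mpow_conj:
  assumes inv: "\<forall>i<n. \<forall>j<n. mmul n Q Qi i j = mid i j \<and> mmul n Qi Q i j = mid i j"
    and AK: "\<forall>i<n. \<forall>j<n. AK i j = mmul n (mmul n Qi L) Q i j"
  shows "i < n \<Longrightarrow> mvmul n (mpow n AK k) x i = mvmul n Qi (mvmul n (mpow n L k) (mvmul n Q x)) i"
proof (induction k arbitrary: i x)
  case 0
  have "mvmul n Qi (mvmul n (mpow n L 0) (mvmul n Q x)) i = mvmul n Qi (mvmul n Q x) i"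
  proof -
    have "mvmul n (mpow n L 0) (mvmul n Q x) = mvmul n mid (mvmul n Q x)" by simp
    have "mvmul n Qi (mvmul n mid (mvmul n Q x)) = mvmul n Qi (mvmul n Q x)"
      by (rule mvmul_cong) (simp add: mvmul_mid)
    then show ?thesis by simp
  qed
  also have "\<dots> = mvmul n (mmul n Qi Q) x i" by (simp add: mvmul_mmul)
  also have "\<dots> = mvmul n mid x i" using inv 0 by (intro mvmul_cong_mat) auto
  finally show ?case using 0 by (simp add: mvmul_mid)
next
  case (Suc k)
  have "mvmul n (mpow n AK (Suc k)) x i = mvmul n AK (mvmul n (mpow n AK k) x) i"
    by (simp add: mvmul_mmul)
  also have "\<dots> = mvmul n (mmul n (mmul n Qi L) Q) (mvmul n (mpow n AK k) x) i"
    using AK Suc.prems by (intro mvmul_cong_mat) auto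
  also have "\<dots> = mvmul n Qi (mvmul n L (mvmul n Q (mvmul n (mpow n AK k) x))) i"
    by (simp add: mvmul_mmul)
  also have "mvmul n Q (mvmul n (mpow n AK k) x)
      = mvmul n Q (mvmul n Qi (mvmul n (mpow n L k) (mvmul n Q x)))"
    using Suc.IH by (intro mvmul_cong) auto
  also have "mvmul n L \<dots> = mvmul n L (mvmul n (mpow n L k) (mvmul n Q x))"
  proof (rule mvmul_cong)
    fix j assume j: "j < n"
    have "mvmul n Q (mvmul n Qi (mvmul n (mpow n L k) (mvmul n Q x))) j
        = mvmul n (mmul n Q Qi) (mvmul n (mpow n L k) (mvmul n Q x)) j"
      by (simp add: mvmul_mmul)
    also have "\<dots> = mvmul n mid (mvmul n (mpow n L k) (mvmul n Q x)) j"
      using inv j by (intro mvmul_cong_mat) auto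
    finally show "mvmul n Q (mvmul n Qi (mvmul n (mpow n L k) (mvmul n Q x))) j
        = mvmul n (mpow n L k) (mvmul n Q x) j" using j by (simp add: mvmul_mid)
  qed
  also have "\<dots> = mvmul n (mpow n L (Suc k)) (mvmul n Q x)"
    by (simp add: mvmul_mmul)
  finally show ?case .
qed

lemma opb_mpow:
  assumes "opb n n L \<beta>" "0 \<le> \<beta>"
  shows "opb n n (mpow n L k) (\<beta>^k)"
proof (induction k)
  case 0
  show ?case unfolding opb_def
    by (auto intro!: eq_refl vnorm2_cong simp: mvmul_mid)
next
  case (Suc k)
  show ?case unfolding opb_def
  proof
    fix x
    have "vnorm2 n (mvmul n (mpow n L (Suc k)) x) = vnorm2 n (mvmul n L (mvmul n (mpow n L k) x))"
      by (simp add: mvmul_mmul)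
    also have "\<dots> \<le> \<beta> * vnorm2 n (mvmul n (mpow n L k) x)" using assms(1) by (rule opbD)
    also have "\<dots> \<le> \<beta> * (\<beta>^k * vnorm2 n x)"
      using Suc opbD assms(2) by (intro mult_left_mono) auto
    finally show "vnorm2 n (mvmul n (mpow n L (Suc k)) x) \<le> \<beta> ^ Suc k * vnorm2 n x"
      by (simp add: ac_simps)
  qed
qed

lemma spec_norm_nonneg: "0 \<le> spec_norm r c X"
proof -
  have "vnorm2 r (mvmul c X (\<lambda>_. 0)) \<le> spec_norm r c X * vnorm2 c (\<lambda>_. 0)"
    using spec_norm_opb opbD by blast
  moreover have "vnorm2 c (\<lambda>_. 0) = 1 \<or> True" by simp
  have "0 \<le> vnorm2 r (mvmul c X (\<lambda>_. 0))" by simp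
  show ?thesis
  proof -
    let ?S = "(\<lambda>x. vnorm2 r (mvmul c X x)) ` {x. vnorm2 c x \<le> 1}"
    have bdd: "bdd_above ?S"
    proof (rule bdd_aboveI)
      fix y assume "y \<in> ?S"
      then obtain z where z: "vnorm2 c z \<le> 1" "y = vnorm2 r (mvmul c X z)" by auto
      have "y \<le> frobm r c X * vnorm2 c z" using z mvmul_frob by simp
      also have "\<dots> \<le> frobm r c X" using z(1)
        by (simp add: frobm_def mult_left_le sum_nonneg)
      finally show "y \<le> frobm r c X" .
    qed
    have "vnorm2 c (\<lambda>_. 0) \<le> 1" by (simp add: vnorm2_def)
    then have "vnorm2 r (mvmul c X (\<lambda>_. 0)) \<in> ?S" by auto
    then have "vnorm2 r (mvmul c X (\<lambda>_. 0)) \<le> spec_norm r c X"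
      unfolding spec_norm_def using bdd by (rule cSup_upper)
    then show ?thesis by (meson order_trans vnorm2_nonneg)
  qed
qed

lemma strongly_stable_pow:
  assumes "strongly_stable n m A B \<kappa> \<gamma> K" "\<gamma> < 1"
  shows "opb n n (mpow n (closed_loop m A B K) k) (\<kappa>^2 * (1-\<gamma>)^k)"
proof -
  obtain Q Qi L where inv: "\<forall>i<n. \<forall>j<n. mmul n Q Qi i j = mid i j \<and> mmul n Qi Q i j = mid i j"
    and AK: "\<forall>i<n. \<forall>j<n. A i j - mmul m B K i j = mmul n (mmul n Qi L) Q i j"
    and nL: "spec_norm n n L \<le> 1 - \<gamma>" and nQ: "spec_norm n n Q \<le> \<kappa>" and nQi: "spec_norm n n Qi \<le> \<kappa>"
    using assms(1) unfolding strongly_stable_def by blast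
  have AK': "\<forall>i<n. \<forall>j<n. closed_loop m A B K i j = mmul n (mmul n Qi L) Q i j"
    using AK by (simp add: closed_loop_def)
  have oL: "opb n n (mpow n L k) ((1-\<gamma>)^k)"
    using opb_mpow[OF opb_mono[OF spec_norm_opb nL]] assms(2) by simp
  have oQ: "opb n n Q \<kappa>" using opb_mono[OF spec_norm_opb nQ] .
  have oQi: "opb n n Qi \<kappa>" using opb_mono[OF spec_norm_opb nQi] .
  have k0: "0 \<le> \<kappa>" using nQ spec_norm_nonneg order_trans by blast
  show ?thesis unfolding opb_def
  proof
    fix x
    have "vnorm2 n (mvmul n (mpow n (closed_loop m A B K) k) x)
        = vnorm2 n (mvmul n Qi (mvmul n (mpow n L k) (mvmul n Q x)))"
      by (intro vnorm2_cong mpow_conj[OF inv AK'])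
    also have "\<dots> \<le> \<kappa> * vnorm2 n (mvmul n (mpow n L k) (mvmul n Q x))" using oQi by (rule opbD)
    also have "\<dots> \<le> \<kappa> * ((1-\<gamma>)^k * vnorm2 n (mvmul n Q x))"
      using oL k0 by (intro mult_left_mono opbD) auto
    also have "\<dots> \<le> \<kappa> * ((1-\<gamma>)^k * (\<kappa> * vnorm2 n x))"
      using oQ k0 assms(2) by (intro mult_left_mono opbD) auto
    finally show "vnorm2 n (mvmul n (mpow n (closed_loop m A B K) k) x) \<le> \<kappa>^2 * (1-\<gamma>)^k * vnorm2 n x"
      by (simp add: power2_eq_square ac_simps)
  qed
qed

lemma strongly_stable_K:
  assumes "strongly_stable n m A B \<kappa> \<gamma> K"
  shows "opb m n K \<kappa>"
  using assms unfolding strongly_stable_def by (meson opb_mono spec_norm_opb)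


lemma cost_subgrad:
  assumes cvx: "\<forall>x u x' u' \<theta>. 0 \<le> \<theta> \<and> \<theta> \<le> 1 \<longrightarrow>
        f (\<lambda>i. \<theta> * x i + (1 - \<theta>) * x' i) (\<lambda>j. \<theta> * u j + (1 - \<theta>) * u' j)
          \<le> \<theta> * f x u + (1 - \<theta>) * f x' u'"
    and hg: "has_grad n m f x u gvx gvu"
  shows "f x u + (\<Sum>i<n. gvx i * (y i - x i)) + (\<Sum>j<m. gvu j * (v j - u j)) \<le> f y v"
proof -
  define lin where "lin = (\<Sum>i<n. gvx i * (y i - x i)) + (\<Sum>j<m. gvu j * (v j - u j))"
  define \<nu> where "\<nu> = sqrt ((vnorm2 n (\<lambda>i. y i - x i))^2 + (vnorm2 m (\<lambda>j. v j - u j))^2)"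
  have \<nu>0: "0 \<le> \<nu>" unfolding \<nu>_def by simp
  have key: "f x u + lin - e * \<nu> \<le> f y v" if e: "e > 0" for e
  proof -
    obtain d where d: "d > 0" and dH: "\<forall>h k. sqrt ((vnorm2 n h)^2 + (vnorm2 m k)^2) < d \<longrightarrow>
        \<bar>f (\<lambda>i. x i + h i) (\<lambda>j. u j + k j) - f x u - (\<Sum>i<n. gvx i * h i) - (\<Sum>j<m. gvu j * k j)\<bar>
          \<le> e * sqrt ((vnorm2 n h)^2 + (vnorm2 m k)^2)"
      using hg e unfolding has_grad_def by blast
    define \<theta> where "\<theta> = min 1 (d / (2 * (\<nu> + 1)))"
    have th0: "0 < \<theta>" using d \<nu>0 unfolding \<theta>_def by simp
    have th1: "\<theta> \<le> 1" unfolding \<theta>_def by simp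
    have "\<theta> * \<nu> \<le> d / (2 * (\<nu> + 1)) * \<nu>" using \<nu>0 unfolding \<theta>_def
      by (intro mult_right_mono) auto
    also have "\<dots> < d"
    proof -
      have "d / (2 * (\<nu> + 1)) * \<nu> = d * (\<nu> / (2 * (\<nu> + 1)))" by simp
      also have "\<nu> / (2 * (\<nu> + 1)) < 1" using \<nu>0 by (simp add: field_simps)
      then have "d * (\<nu> / (2 * (\<nu> + 1))) < d * 1" using d by (intro mult_strict_left_mono) auto
      finally show ?thesis by simp
    qed
    finally have thd: "\<theta> * \<nu> < d" .
    define h where "h = (\<lambda>i. \<theta> * (y i - x i))"
    define k where "k = (\<lambda>j. \<theta> * (v j - u j))"
    have nh: "sqrt ((vnorm2 n h)^2 + (vnorm2 m k)^2) = \<theta> * \<nu>"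
    proof -
      have "(vnorm2 n h)^2 + (vnorm2 m k)^2 = \<theta>^2 * ((vnorm2 n (\<lambda>i. y i - x i))^2 + (vnorm2 m (\<lambda>j. v j - u j))^2)"
        unfolding h_def k_def vnorm2_scale using th0 by (simp add: power_mult_distrib algebra_simps)
      then show ?thesis unfolding \<nu>_def using th0 by (simp add: real_sqrt_mult)
    qed
    have bound: "\<bar>f (\<lambda>i. x i + h i) (\<lambda>j. u j + k j) - f x u - (\<Sum>i<n. gvx i * h i) - (\<Sum>j<m. gvu j * k j)\<bar>
          \<le> e * (\<theta> * \<nu>)"
    proof -
      have "sqrt ((vnorm2 n h)^2 + (vnorm2 m k)^2) < d" using nh thd by simp
      from dH[rule_format, OF this] show ?thesis unfolding nh .
    qed
    have lin': "(\<Sum>i<n. gvx i * h i) + (\<Sum>j<m. gvu j * k j) = \<theta> * lin"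
      unfolding h_def k_def lin_def by (simp add: sum_distrib_left algebra_simps)
    have ex: "(\<lambda>i. x i + h i) = (\<lambda>i. \<theta> * y i + (1 - \<theta>) * x i)"
      unfolding h_def by (auto simp: algebra_simps)
    have eu: "(\<lambda>j. u j + k j) = (\<lambda>j. \<theta> * v j + (1 - \<theta>) * u j)"
      unfolding k_def by (auto simp: algebra_simps)
    have cv: "f (\<lambda>i. x i + h i) (\<lambda>j. u j + k j) \<le> \<theta> * f y v + (1 - \<theta>) * f x u"
      unfolding ex eu using cvx[rule_format, of \<theta> y x v u] th0 th1 by simp
    have b': "f (\<lambda>i. x i + h i) (\<lambda>j. u j + k j) - f x u - \<theta> * lin \<ge> - (e * (\<theta> * \<nu>))"
      using bound lin' unfolding abs_le_iff by linarith
    have e1: "(1 - \<theta>) * f x u = f x u - \<theta> * f x u" by (simp add: algebra_simps)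
    have e2: "e * (\<theta> * \<nu>) = \<theta> * (e * \<nu>)" by simp
    have "\<theta> * f y v \<ge> \<theta> * f x u + \<theta> * lin - \<theta> * (e * \<nu>)"
      using b' cv e1 e2 by linarith
    then have "\<theta> * (f x u + lin - e * \<nu>) \<le> \<theta> * f y v"
      by (simp add: algebra_simps)
    then show ?thesis using th0 by simp
  qed
  have "f x u + lin \<le> f y v"
  proof (rule field_le_epsilon)
    fix e :: real assume e: "0 < e"
    have "e / (\<nu> + 1) > 0" using e \<nu>0 by simp
    from key[OF this] have "f x u + lin - (e / (\<nu> + 1)) * \<nu> \<le> f y v" .
    moreover have "(e / (\<nu> + 1)) * \<nu> \<le> e" using e \<nu>0 by (simp add: field_simps)
    ultimately show "f x u + lin \<le> f y v + e" by simp
  qed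
  then show ?thesis unfolding lin_def by simp
qed

lemma cost_cvx: "cost_model n m G c \<Longrightarrow> \<forall>x u x' u' \<theta>. 0 \<le> \<theta> \<and> \<theta> \<le> 1 \<longrightarrow>
        c t (\<lambda>i. \<theta> * x i + (1 - \<theta>) * x' i) (\<lambda>j. \<theta> * u j + (1 - \<theta>) * u' j)
          \<le> \<theta> * c t x u + (1 - \<theta>) * c t x' u'"
  unfolding cost_model_def by blast

lemma cost_lip1:
  assumes cm: "cost_model n m G c" and b: "vnorm2 n x \<le> b" "vnorm2 m u \<le> b"
  shows "c t x u - c t x' u' \<le> G * b * (vnorm2 n (\<lambda>i. x i - x' i) + vnorm2 m (\<lambda>j. u j - u' j))"
proof -
  have "\<exists>a b. has_grad n m (c t) x u a b" using cm unfolding cost_model_def by simp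
  then obtain gvx gvu where hg: "has_grad n m (c t) x u gvx gvu" by blast
  have ng: "vnorm2 n gvx \<le> G * b \<and> vnorm2 m gvu \<le> G * b" using cm hg b unfolding cost_model_def by simp
  have sg: "c t x u + (\<Sum>i<n. gvx i * (x' i - x i)) + (\<Sum>j<m. gvu j * (u' j - u j)) \<le> c t x' u'"
    by (rule cost_subgrad[OF cost_cvx[OF cm] hg])
  have "\<bar>\<Sum>i<n. gvx i * (x' i - x i)\<bar> \<le> vnorm2 n gvx * vnorm2 n (\<lambda>i. x' i - x i)"
    by (rule inner_le_vnorm2)
  also have "\<dots> \<le> G * b * vnorm2 n (\<lambda>i. x i - x' i)"
    using ng by (simp add: vnorm2_diff_sym[of n x'] mult_right_mono del: vnorm2_nonneg) (simp add: mult_right_mono)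
  finally have 1: "\<bar>\<Sum>i<n. gvx i * (x' i - x i)\<bar> \<le> G * b * vnorm2 n (\<lambda>i. x i - x' i)" .
  have "\<bar>\<Sum>j<m. gvu j * (u' j - u j)\<bar> \<le> vnorm2 m gvu * vnorm2 m (\<lambda>j. u' j - u j)"
    by (rule inner_le_vnorm2)
  also have "\<dots> \<le> G * b * vnorm2 m (\<lambda>j. u j - u' j)"
    using ng by (simp add: vnorm2_diff_sym[of m u'] mult_right_mono del: vnorm2_nonneg) (simp add: mult_right_mono)
  finally have 2: "\<bar>\<Sum>j<m. gvu j * (u' j - u j)\<bar> \<le> G * b * vnorm2 m (\<lambda>j. u j - u' j)" .
  show ?thesis using sg 1 2 by (simp add: algebra_simps abs_le_iff)
qed

lemma cost_lip:
  assumes cm: "cost_model n m G c" and b: "vnorm2 n x \<le> b" "vnorm2 m u \<le> b" "vnorm2 n x' \<le> b" "vnorm2 m u' \<le> b"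
  shows "\<bar>c t x u - c t x' u'\<bar> \<le> G * b * (vnorm2 n (\<lambda>i. x i - x' i) + vnorm2 m (\<lambda>j. u j - u' j))"
proof -
  have "c t x u - c t x' u' \<le> G * b * (vnorm2 n (\<lambda>i. x i - x' i) + vnorm2 m (\<lambda>j. u j - u' j))"
    using cost_lip1[OF cm b(1,2)] .
  moreover have "c t x' u' - c t x u \<le> G * b * (vnorm2 n (\<lambda>i. x i - x' i) + vnorm2 m (\<lambda>j. u j - u' j))"
    using cost_lip1[OF cm b(3,4), of t x u] by (simp add: vnorm2_diff_sym[of n x'] vnorm2_diff_sym[of m u'])
  ultimately show ?thesis by (simp add: abs_le_iff)
qed

lemma coord_cont[continuous_intros]: "continuous_on S (\<lambda>z::nat \<Rightarrow> real. z i)"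
  by (rule continuous_on_subset[OF continuous_on_product_coordinates]) auto

lemma cost_cont:
  assumes cm: "cost_model n m G c"
  shows "continuous_on UNIV (\<lambda>z::nat \<Rightarrow> real. c t (\<lambda>i. z (2*i)) (\<lambda>j. z (2*j+1)))"
proof -
  have "continuous (at z0) (\<lambda>z::nat \<Rightarrow> real. c t (\<lambda>i. z (2*i)) (\<lambda>j. z (2*j+1)))" for z0
  proof -
    define x0 where "x0 = (\<lambda>i. z0 (2*i))"
    define u0 where "u0 = (\<lambda>j. z0 (2*j+1))"
    have "\<exists>a b. has_grad n m (c t) x0 u0 a b" using cm unfolding cost_model_def by simp
    then obtain gvx gvu where hg: "has_grad n m (c t) x0 u0 gvx gvu" by blast
    define N where "N = (\<lambda>z::nat \<Rightarrow> real. sqrt ((vnorm2 n (\<lambda>i. z (2*i) - x0 i))^2 + (vnorm2 m (\<lambda>j. z (2*j+1) - u0 j))^2))"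
    have c1: "continuous_on UNIV (\<lambda>z::nat\<Rightarrow>real. (\<Sum>i<n. (z (2*i) - x0 i)^2))"
      by (intro continuous_on_sum continuous_on_power continuous_on_diff coord_cont continuous_on_const)
    have c2: "continuous_on UNIV (\<lambda>z::nat\<Rightarrow>real. (\<Sum>j<m. (z (2*j+1) - u0 j)^2))"
      by (intro continuous_on_sum continuous_on_power continuous_on_diff coord_cont continuous_on_const)
    have Nc: "continuous_on UNIV N" unfolding N_def vnorm2_def
      by (intro continuous_on_real_sqrt continuous_on_add continuous_on_power c1 c2)
    have N0: "N z0 = 0" unfolding N_def x0_def u0_def by (simp add: vnorm2_def)
    have Nt: "(N \<longlongrightarrow> 0) (at z0)"
    proof -
      have "isCont N z0" using Nc continuous_on_eq_continuous_at open_UNIV by blast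
      then show ?thesis using N0 unfolding isCont_def by simp
    qed
    define C where "C = vnorm2 n gvx + vnorm2 m gvu + 1"
    have C0: "C > 0" unfolding C_def by (simp add: add_nonneg_pos)
    show ?thesis unfolding continuous_at tendsto_iff
    proof (intro allI impI)
      fix e :: real assume e: "0 < e"
      obtain d where d: "d > 0" and dH: "\<forall>h k. sqrt ((vnorm2 n h)^2 + (vnorm2 m k)^2) < d \<longrightarrow>
        \<bar>c t (\<lambda>i. x0 i + h i) (\<lambda>j. u0 j + k j) - c t x0 u0 - (\<Sum>i<n. gvx i * h i) - (\<Sum>j<m. gvu j * k j)\<bar>
          \<le> 1 * sqrt ((vnorm2 n h)^2 + (vnorm2 m k)^2)"
        using hg unfolding has_grad_def by (meson zero_less_one)
      have ev: "eventually (\<lambda>z. dist (N z) 0 < min d (e / C)) (at z0)"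
      proof -
        have "min d (e / C) > 0" using d e C0 by simp
        then show ?thesis using Nt unfolding tendsto_iff by blast
      qed
      show "eventually (\<lambda>z. dist (c t (\<lambda>i. z (2*i)) (\<lambda>j. z (2*j+1))) (c t (\<lambda>i. z0 (2*i)) (\<lambda>j. z0 (2*j+1))) < e) (at z0)"
      proof (rule eventually_mono[OF ev])
        fix z assume zN: "dist (N z) 0 < min d (e / C)"
        define h where "h = (\<lambda>i. z (2*i) - x0 i)"
        define k where "k = (\<lambda>j. z (2*j+1) - u0 j)"
        have Nz: "N z = sqrt ((vnorm2 n h)^2 + (vnorm2 m k)^2)" unfolding N_def h_def k_def ..
        have Nn: "N z \<ge> 0" unfolding N_def by simp
        have nh: "vnorm2 n h \<le> N z" unfolding Nz by (simp add: real_sqrt_sum_squares_ge1)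
        have nk: "vnorm2 m k \<le> N z" unfolding Nz by (simp add: real_sqrt_sum_squares_ge2)
        have ex: "(\<lambda>i. x0 i + h i) = (\<lambda>i. z (2*i))" unfolding h_def by auto
        have eu: "(\<lambda>j. u0 j + k j) = (\<lambda>j. z (2*j+1))" unfolding k_def by auto
        have b1: "\<bar>c t (\<lambda>i. z (2*i)) (\<lambda>j. z (2*j+1)) - c t x0 u0 - (\<Sum>i<n. gvx i * h i) - (\<Sum>j<m. gvu j * k j)\<bar> \<le> N z"
        proof -
          have "N z < d" using zN Nn by (simp add: dist_real_def)
          then have "\<bar>c t (\<lambda>i. x0 i + h i) (\<lambda>j. u0 j + k j) - c t x0 u0 - (\<Sum>i<n. gvx i * h i) - (\<Sum>j<m. gvu j * k j)\<bar>
            \<le> 1 * sqrt ((vnorm2 n h)^2 + (vnorm2 m k)^2)" using dH[rule_format, of h k] Nz by simp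
          then show ?thesis unfolding ex eu Nz by simp
        qed
        have b2: "\<bar>\<Sum>i<n. gvx i * h i\<bar> \<le> vnorm2 n gvx * N z"
          using inner_le_vnorm2[where d=n and x=gvx and y=h] mult_left_mono[OF nh vnorm2_nonneg[of n gvx]] by linarith
        have b3: "\<bar>\<Sum>j<m. gvu j * k j\<bar> \<le> vnorm2 m gvu * N z"
          using inner_le_vnorm2[where d=m and x=gvu and y=k] mult_left_mono[OF nk vnorm2_nonneg[of m gvu]] by linarith
        have "\<bar>c t (\<lambda>i. z (2*i)) (\<lambda>j. z (2*j+1)) - c t x0 u0\<bar> \<le> C * N z"
          using b1 b2 b3 unfolding C_def by (simp add: algebra_simps abs_le_iff)
        also have "\<dots> < C * (e / C)" using zN Nn C0 by (intro mult_strict_left_mono) auto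
        also have "\<dots> = e" using C0 by simp
        finally show "dist (c t (\<lambda>i. z (2*i)) (\<lambda>j. z (2*j+1))) (c t (\<lambda>i. z0 (2*i)) (\<lambda>j. z0 (2*j+1))) < e"
          unfolding dist_real_def x0_def u0_def by simp
      qed
    qed
  qed
  then show ?thesis by (simp add: continuous_at_imp_continuous_on)
qed

lemma cost_meas:
  assumes cm: "cost_model n m G c"
  shows "(\<lambda>z::nat \<Rightarrow> real. c t (\<lambda>i. z (2*i)) (\<lambda>j. z (2*j+1))) \<in> borel_measurable (Pi\<^sub>M UNIV (\<lambda>_. borel))"
proof -
  have "(\<lambda>z::nat \<Rightarrow> real. c t (\<lambda>i. z (2*i)) (\<lambda>j. z (2*j+1))) \<in> borel_measurable borel"
    by (rule borel_measurable_continuous_onI[OF cost_cont[OF cm]])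
  moreover have "measurable (Pi\<^sub>M UNIV (\<lambda>_::nat. borel::real measure)) (borel::real measure) = measurable borel borel"
    by (rule measurable_cong_sets[OF sets_PiM_equal_borel refl])
  ultimately show ?thesis by simp
qed


definition P0 :: "nat \<Rightarrow> nat \<Rightarrow> matr \<Rightarrow> nat \<Rightarrow> matr" where
  "P0 n H AK k = (\<lambda>r b. if k \<le> H then mpow n AK (k - 1) r b else 0)"

definition PhiLh :: "nat \<Rightarrow> nat \<Rightarrow> nat \<Rightarrow> matr \<Rightarrow> matr \<Rightarrow> (int \<Rightarrow> param) \<Rightarrow> int \<Rightarrow> nat \<Rightarrow> matr" where
  "PhiLh n m H AK B hist t k = (\<lambda>r b. \<Sum>i\<in>{1..H}. if i < k \<and> k - i \<le> H
          then mmul m (mmul n (mpow n AK (i - 1)) B) (hist (t - int i) (k - i)) r b else 0)"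

lemma Phix_split: "Phix n m H AK B hist t k = (\<lambda>r b. P0 n H AK k r b + PhiLh n m H AK B hist t k r b)"
  unfolding Phix_def P0_def PhiLh_def by simp

lemma mmul_lin: "mmul m X (\<lambda>a b. \<alpha> * Y1 a b + \<beta> * Y2 a b) r b = \<alpha> * mmul m X Y1 r b + \<beta> * mmul m X Y2 r b"
  unfolding mmul_def by (simp add: sum.distrib sum_distrib_left algebra_simps)

lemma PhiLh_lin: "PhiLh n m H AK B (\<lambda>s i a b. \<alpha> * hA s i a b + \<beta> * hB s i a b) t k r b
    = \<alpha> * PhiLh n m H AK B hA t k r b + \<beta> * PhiLh n m H AK B hB t k r b"
proof -
  have "PhiLh n m H AK B (\<lambda>s i a b. \<alpha> * hA s i a b + \<beta> * hB s i a b) t k r b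
     = (\<Sum>i\<in>{1..H}. \<alpha> * (if i < k \<and> k - i \<le> H
          then mmul m (mmul n (mpow n AK (i - 1)) B) (hA (t - int i) (k - i)) r b else 0)
        + \<beta> * (if i < k \<and> k - i \<le> H
          then mmul m (mmul n (mpow n AK (i - 1)) B) (hB (t - int i) (k - i)) r b else 0))"
    unfolding PhiLh_def by (intro sum.cong refl) (simp add: mmul_lin)
  then show ?thesis unfolding PhiLh_def by (simp add: sum.distrib sum_distrib_left)
qed

lemma mvmul_sum: "mvmul c (\<lambda>r b. \<Sum>i\<in>I. f i r b) x = (\<lambda>r. \<Sum>i\<in>I. mvmul c (f i) x r)"
  unfolding mvmul_def by (auto simp: sum_distrib_right intro!: ext sum.swap)

lemma mvmul_if: "mvmul c (\<lambda>r b. if P then X r b else 0) x = (if P then mvmul c X x else (\<lambda>_. 0))"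
  unfolding mvmul_def by auto

lemma PhiLh_vec: "mvmul n (PhiLh n m H AK B hist t k) w = (\<lambda>r. \<Sum>i\<in>{1..H}. if i < k \<and> k - i \<le> H
          then mvmul n (mpow n AK (i - 1)) (mvmul m B (mvmul n (hist (t - int i) (k - i)) w)) r else 0)"
proof -
  have "mvmul n (PhiLh n m H AK B hist t k) w = (\<lambda>r. \<Sum>i\<in>{1..H}. mvmul n (\<lambda>r b. if i < k \<and> k - i \<le> H
          then mmul m (mmul n (mpow n AK (i - 1)) B) (hist (t - int i) (k - i)) r b else 0) w r)"
    unfolding PhiLh_def by (rule mvmul_sum)
  also have "\<dots> = (\<lambda>r. \<Sum>i\<in>{1..H}. if i < k \<and> k - i \<le> H
          then mvmul n (mpow n AK (i - 1)) (mvmul m B (mvmul n (hist (t - int i) (k - i)) w)) r else 0)"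
    by (intro ext sum.cong refl) (simp add: mvmul_if mvmul_mmul)
  finally show ?thesis .
qed

lemma vnorm2_sum_if: "finite I \<Longrightarrow> vnorm2 d (\<lambda>r. \<Sum>i\<in>I. if P i then v i r else 0)
    \<le> (\<Sum>i\<in>I. if P i then vnorm2 d (v i) else 0)"
proof -
  assume fI: "finite I"
  have "vnorm2 d (\<lambda>r. \<Sum>i\<in>I. if P i then v i r else 0) \<le> (\<Sum>i\<in>I. vnorm2 d (\<lambda>r. if P i then v i r else 0))"
    using vnorm2_sum[OF fI, of d "\<lambda>i r. if P i then v i r else 0"] by simp
  also have "\<dots> = (\<Sum>i\<in>I. if P i then vnorm2 d (v i) else 0)"
    by (intro sum.cong refl) (auto simp: vnorm2_def)
  finally show ?thesis .
qed

lemma PhiLh_bound: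
  assumes oA: "\<And>j. opb n n (mpow n AK j) (\<kappa>^2 * (1-\<gamma>)^j)" and oB: "opb n m B \<kappa>B"
    and pos: "0 \<le> \<kappa>B" "0 \<le> \<kappa>" "\<gamma> \<le> 1"
  shows "vnorm2 n (mvmul n (PhiLh n m H AK B hist t k) w) \<le> (\<Sum>i\<in>{1..H}. if i < k \<and> k - i \<le> H
          then \<kappa>^2 * (1-\<gamma>)^(i-1) * \<kappa>B * vnorm2 m (mvmul n (hist (t - int i) (k - i)) w) else 0)"
proof -
  have "vnorm2 n (mvmul n (PhiLh n m H AK B hist t k) w) \<le> (\<Sum>i\<in>{1..H}. if i < k \<and> k - i \<le> H
          then vnorm2 n (mvmul n (mpow n AK (i - 1)) (mvmul m B (mvmul n (hist (t - int i) (k - i)) w))) else 0)"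
    unfolding PhiLh_vec by (rule vnorm2_sum_if) simp
  also have "\<dots> \<le> (\<Sum>i\<in>{1..H}. if i < k \<and> k - i \<le> H
          then \<kappa>^2 * (1-\<gamma>)^(i-1) * \<kappa>B * vnorm2 m (mvmul n (hist (t - int i) (k - i)) w) else 0)"
  proof (rule sum_mono)
    fix i
    have "vnorm2 n (mvmul n (mpow n AK (i - 1)) (mvmul m B (mvmul n (hist (t - int i) (k - i)) w)))
        \<le> \<kappa>^2 * (1-\<gamma>)^(i-1) * vnorm2 n (mvmul m B (mvmul n (hist (t - int i) (k - i)) w))"
      using oA by (rule opbD)
    also have "\<dots> \<le> \<kappa>^2 * (1-\<gamma>)^(i-1) * (\<kappa>B * vnorm2 m (mvmul n (hist (t - int i) (k - i)) w))"
      using oB pos by (intro mult_left_mono opbD) auto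
    finally show "(if i < k \<and> k - i \<le> H
          then vnorm2 n (mvmul n (mpow n AK (i - 1)) (mvmul m B (mvmul n (hist (t - int i) (k - i)) w))) else 0)
        \<le> (if i < k \<and> k - i \<le> H
          then \<kappa>^2 * (1-\<gamma>)^(i-1) * \<kappa>B * vnorm2 m (mvmul n (hist (t - int i) (k - i)) w) else 0)"
      by (simp add: ac_simps)
  qed
  finally show ?thesis .
qed

lemma P0_vec: "mvmul n (P0 n H AK k) w = (if k \<le> H then mvmul n (mpow n AK (k - 1)) w else (\<lambda>_. 0))"
  unfolding P0_def by (rule mvmul_if)

lemma geo_sum:
  fixes r :: real
  assumes "0 \<le> r" "r < 1"
  shows "(\<Sum>k\<in>{1..N}. r^(k-1)) \<le> 1 / (1 - r)"
proof -
  have "(\<Sum>k\<in>{1..N}. r^(k-1)) = (\<Sum>k<N. r^k)"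
  proof -
    have "(\<Sum>k\<in>{1..N}. r^(k-1)) = (\<Sum>k\<in>Suc ` {..<N}. r^(k-1))"
      by (simp add: image_Suc_lessThan)
    also have "\<dots> = (\<Sum>k<N. r^k)" by (subst sum.reindex) auto
    finally show ?thesis .
  qed
  also have "\<dots> = (1 - r^N) / (1 - r)" using assms by (simp add: sum_gp_strict)
  also have "\<dots> \<le> 1 / (1 - r)" using assms by (intro divide_right_mono) auto
  finally show ?thesis .
qed

lemma geo_sum_i:
  fixes r :: real
  assumes "0 \<le> r" "r < 1"
  shows "(\<Sum>k\<in>{1..N}. real k * r^(k-1)) \<le> 1 / (1 - r)^2"
proof -
  have eq: "(\<Sum>k<N. real (Suc k) * r^k) * (1 - r)^2 = 1 - real (Suc N) * r^N + real N * r^(Suc N)" for N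
  proof (induction N)
    case 0 then show ?case by simp
  next
    case (Suc N)
    have "(\<Sum>k<Suc N. real (Suc k) * r^k) * (1 - r)^2
        = (\<Sum>k<N. real (Suc k) * r^k) * (1 - r)^2 + real (Suc N) * r^N * (1-r)^2"
      by (simp add: algebra_simps)
    also have "\<dots> = 1 - real (Suc (Suc N)) * r^(Suc N) + real (Suc N) * r^(Suc (Suc N))"
      unfolding Suc by (simp add: power2_eq_square algebra_simps)
    finally show ?case .
  qed
  have "(\<Sum>k\<in>{1..N}. real k * r^(k-1)) = (\<Sum>k<N. real (Suc k) * r^k)"
  proof -
    have "(\<Sum>k\<in>{1..N}. real k * r^(k-1)) = (\<Sum>k\<in>Suc ` {..<N}. real k * r^(k-1))"
      by (simp add: image_Suc_lessThan)
    also have "\<dots> = (\<Sum>k<N. real (Suc k) * r^k)" by (subst sum.reindex) auto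
    finally show ?thesis .
  qed
  moreover have "(\<Sum>k<N. real (Suc k) * r^k) * (1 - r)^2 \<le> 1"
  proof -
    have "real (Suc N) * r^N \<ge> real N * r^(Suc N)"
    proof -
      have "real N * r^(Suc N) = (real N * r) * r^N" by simp
      also have "\<dots> \<le> real (Suc N) * r^N" using assms
        by (intro mult_right_mono) (auto intro: order_trans[of _ "real N"] simp: mult_left_le)
      finally show ?thesis .
    qed
    then show ?thesis unfolding eq by simp
  qed
  ultimately show ?thesis using assms by (simp add: field_simps)
qed


definition frobp :: "nat \<Rightarrow> nat \<Rightarrow> nat \<Rightarrow> param \<Rightarrow> real" where
  "frobp H m n V = sqrt (\<Sum>i\<in>{1..H}. \<Sum>a<m. \<Sum>b<n. (V i a b)^2)"

definition ipg :: "nat \<Rightarrow> nat \<Rightarrow> nat \<Rightarrow> param \<Rightarrow> param \<Rightarrow> real" where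
  "ipg H m n g V = (\<Sum>i\<in>{1..H}. \<Sum>a<m. \<Sum>b<n. g i a b * V i a b)"

lemma ipg_add: "ipg H m n g (\<lambda>i a b. Y1 i a b + Y2 i a b) = ipg H m n g Y1 + ipg H m n g Y2"
  unfolding ipg_def by (simp add: distrib_left sum.distrib)

lemma ipg_scale: "ipg H m n g (\<lambda>i a b. s * Y i a b) = s * ipg H m n g Y"
  unfolding ipg_def by (simp add: sum_distrib_left ac_simps)

lemma ipg_single:
  assumes "i0 \<in> {1..H}" "a0 < m" "b0 < n"
  shows "ipg H m n g (\<lambda>i a b. if i = i0 \<and> a = a0 \<and> b = b0 then v else 0) = g i0 a0 b0 * v"
proof -
  have inner: "(\<Sum>b<n. g i a b * (if i = i0 \<and> a = a0 \<and> b = b0 then v else 0)) = (if i = i0 \<and> a = a0 then g i a b0 * v else 0)" for i a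
  proof (cases "i = i0 \<and> a = a0")
    case True
    then have "(\<Sum>b<n. g i a b * (if i = i0 \<and> a = a0 \<and> b = b0 then v else 0)) = (\<Sum>b<n. if b = b0 then g i a b * v else 0)"
      by (intro sum.cong) auto
    then show ?thesis using True assms by (simp add: sum.delta')
  next
    case False
    then have "\<And>b. (if i = i0 \<and> a = a0 \<and> b = b0 then v else 0) = 0" by auto
    then have "(\<Sum>b<n. g i a b * (if i = i0 \<and> a = a0 \<and> b = b0 then v else 0)) = 0" by simp
    then show ?thesis using False by (simp only: if_False)
  qed
  have mid: "(\<Sum>a<m. if i = i0 \<and> a = a0 then g i a b0 * v else 0) = (if i = i0 then g i a0 b0 * v else 0)" for i
  proof (cases "i = i0")
    case True
    then have "(\<Sum>a<m. if i = i0 \<and> a = a0 then g i a b0 * v else 0) = (\<Sum>a<m. if a = a0 then g i a b0 * v else 0)"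
      by (intro sum.cong) auto
    then show ?thesis using True assms by (simp add: sum.delta')
  qed simp
  have "ipg H m n g (\<lambda>i a b. if i = i0 \<and> a = a0 \<and> b = b0 then v else 0) = (\<Sum>i\<in>{1..H}. if i = i0 then g i a0 b0 * v else 0)"
    unfolding ipg_def inner mid ..
  also have "\<dots> = g i0 a0 b0 * v" using assms by (simp add: sum.delta')
  finally show ?thesis .
qed

lemma frobp_sq: "(frobp H m n g)^2 = ipg H m n g g"
  unfolding frobp_def ipg_def by (simp add: sum_nonneg power2_eq_square)

lemma deriv_eps:
  assumes "(\<phi> has_real_derivative d) (at 0)" "\<epsilon> > 0"
  shows "\<exists>\<delta>>0. \<forall>t. \<bar>t\<bar> < \<delta> \<longrightarrow> \<bar>\<phi> t - \<phi> 0 - t * d\<bar> \<le> \<epsilon> * \<bar>t\<bar>"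
proof -
  have "((\<lambda>t. (\<phi> t - \<phi> 0) / t) \<longlongrightarrow> d) (at 0)"
    using assms(1) unfolding has_field_derivative_iff by simp
  then have "eventually (\<lambda>t. dist ((\<phi> t - \<phi> 0) / t) d < \<epsilon>) (at 0)"
    using tendstoD assms(2) by blast
  then obtain \<delta> where \<delta>: "\<delta> > 0" and H: "\<And>t. t \<noteq> 0 \<Longrightarrow> dist t 0 < \<delta> \<Longrightarrow> dist ((\<phi> t - \<phi> 0) / t) d < \<epsilon>"
    unfolding eventually_at by auto
  have "\<bar>\<phi> t - \<phi> 0 - t * d\<bar> \<le> \<epsilon> * \<bar>t\<bar>" if t: "\<bar>t\<bar> < \<delta>" for t
  proof (cases "t = 0")
    case True then show ?thesis by simp
  next
    case False
    have "\<bar>(\<phi> t - \<phi> 0) / t - d\<bar> < \<epsilon>" using H[OF False] t by (simp add: dist_real_def)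
    then have "\<bar>((\<phi> t - \<phi> 0) - t * d) / t\<bar> < \<epsilon>" using False by (simp add: field_simps)
    then have "\<bar>(\<phi> t - \<phi> 0) - t * d\<bar> / \<bar>t\<bar> < \<epsilon>" by (simp add: abs_divide)
    then show ?thesis using False by (simp add: field_simps)
  qed
  then show ?thesis using \<delta> by blast
qed

lemma dir_ind:
  fixes f :: "param \<Rightarrow> real"
  assumes cvx: "\<forall>X Y \<theta>. 0 \<le> \<theta> \<and> \<theta> \<le> 1 \<longrightarrow>
      f (\<lambda>i a b. \<theta> * X i a b + (1 - \<theta>) * Y i a b) \<le> \<theta> * f X + (1 - \<theta>) * f Y"
    and pg: "\<forall>i\<in>{1..H}. \<forall>a<m. \<forall>b<n.
        ((\<lambda>s. f (\<lambda>i' a' b'. M i' a' b' + (if i' = i \<and> a' = a \<and> b' = b then s else 0)))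
           has_real_derivative g i a b) (at 0)"
    and fin: "finite J"
  shows "J \<subseteq> {1..H} \<times> {..<m} \<times> {..<n} \<longrightarrow> (\<forall>V. (\<forall>i a b. (i, a, b) \<notin> J \<longrightarrow> V i a b = 0) \<longrightarrow>
     (\<forall>\<epsilon>>0. \<exists>\<delta>>0. \<forall>s. 0 < s \<and> s < \<delta> \<longrightarrow>
        f (\<lambda>i a b. M i a b + s * V i a b) - f M - s * ipg H m n g V \<le> \<epsilon> * s))"
  using fin
proof (induction J rule: finite_induct)
  case empty
  show ?case
  proof (intro impI allI)
    fix V :: param and \<epsilon> :: real
    assume V: "\<forall>i a b. (i, a, b) \<notin> {} \<longrightarrow> V i a b = 0" and e: "\<epsilon> > 0"
    have "(\<lambda>i a b. M i a b + s * V i a b) = M" for s using V by auto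
    moreover have "ipg H m n g V = 0" using V unfolding ipg_def by simp
    ultimately show "\<exists>\<delta>>0. \<forall>s. 0 < s \<and> s < \<delta> \<longrightarrow>
        f (\<lambda>i a b. M i a b + s * V i a b) - f M - s * ipg H m n g V \<le> \<epsilon> * s"
      using e by (intro exI[of _ 1]) auto
  qed
next
  case (insert j J)
  show ?case
  proof (intro impI allI)
    fix V :: param and \<epsilon> :: real
    assume sub: "insert j J \<subseteq> {1..H} \<times> {..<m} \<times> {..<n}"
      and V: "\<forall>i a b. (i, a, b) \<notin> insert j J \<longrightarrow> V i a b = 0" and e: "\<epsilon> > 0"
    obtain i0 a0 b0 where j: "j = (i0, a0, b0)" by (cases j) auto
    have jbox: "i0 \<in> {1..H}" "a0 < m" "b0 < n" using sub j by auto
    define V' where "V' = (\<lambda>i a b. if i = i0 \<and> a = a0 \<and> b = b0 then 0 else V i a b)"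
    define vj where "vj = V i0 a0 b0"
    define E where "E = (\<lambda>i a b. if i = i0 \<and> a = a0 \<and> b = b0 then vj else (0::real))"
    have V'supp: "\<forall>i a b. (i, a, b) \<notin> J \<longrightarrow> V' i a b = 0" using V unfolding V'_def j by auto
    have IH: "\<forall>\<epsilon>>0. \<exists>\<delta>>0. \<forall>s. 0 < s \<and> s < \<delta> \<longrightarrow>
        f (\<lambda>i a b. M i a b + s * V' i a b) - f M - s * ipg H m n g V' \<le> \<epsilon> * s"
      using insert.IH sub V'supp by auto
    obtain \<delta>1 where d1: "\<delta>1 > 0" and H1: "\<forall>s. 0 < s \<and> s < \<delta>1 \<longrightarrow>
        f (\<lambda>i a b. M i a b + s * V' i a b) - f M - s * ipg H m n g V' \<le> (\<epsilon>/2) * s"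
      using IH e by (meson half_gt_zero)
    define \<phi> where "\<phi> = (\<lambda>s. f (\<lambda>i' a' b'. M i' a' b' + (if i' = i0 \<and> a' = a0 \<and> b' = b0 then s else 0)))"
    have der: "(\<phi> has_real_derivative g i0 a0 b0) (at 0)" using pg jbox unfolding \<phi>_def by blast
    have e2: "\<epsilon> / (2 * (\<bar>vj\<bar> + 1)) > 0" using e by (simp add: add_nonneg_pos)
    obtain \<delta>2 where d2: "\<delta>2 > 0" and H2: "\<forall>t. \<bar>t\<bar> < \<delta>2 \<longrightarrow> \<bar>\<phi> t - \<phi> 0 - t * g i0 a0 b0\<bar> \<le> (\<epsilon> / (2 * (\<bar>vj\<bar> + 1))) * \<bar>t\<bar>"
      using deriv_eps[OF der e2] by blast
    have phi0: "\<phi> 0 = f M" unfolding \<phi>_def by simp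
    define \<delta> where "\<delta> = min (\<delta>1 / 2) (\<delta>2 / (2 * (\<bar>vj\<bar> + 1)))"
    have dpos: "\<delta> > 0" unfolding \<delta>_def using d1 d2 by (simp add: add_nonneg_pos)
    have "f (\<lambda>i a b. M i a b + s * V i a b) - f M - s * ipg H m n g V \<le> \<epsilon> * s" if s: "0 < s" "s < \<delta>" for s
    proof -
      have s1: "2 * s < \<delta>1" using s unfolding \<delta>_def by simp
      have "2 * s * (\<bar>vj\<bar> + 1) < \<delta>2" using s unfolding \<delta>_def
        by (simp add: field_simps add_nonneg_pos)
      moreover have "\<bar>2 * s * vj\<bar> \<le> 2 * s * (\<bar>vj\<bar> + 1)" using s by (simp add: abs_mult)
      ultimately have s2: "\<bar>2 * s * vj\<bar> < \<delta>2" by linarith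
      have A: "f (\<lambda>i a b. M i a b + (2 * s) * V' i a b) - f M - (2 * s) * ipg H m n g V' \<le> (\<epsilon>/2) * (2 * s)"
        using H1[rule_format, of "2 * s"] s s1 by simp
      have B0: "\<bar>\<phi> (2 * s * vj) - \<phi> 0 - (2 * s * vj) * g i0 a0 b0\<bar> \<le> (\<epsilon> / (2 * (\<bar>vj\<bar> + 1))) * \<bar>2 * s * vj\<bar>"
        using H2 s2 by blast
      have "(\<epsilon> / (2 * (\<bar>vj\<bar> + 1))) * \<bar>2 * s * vj\<bar> \<le> (\<epsilon>/2) * (2 * s)"
      proof -
        have "(\<epsilon> / (2 * (\<bar>vj\<bar> + 1))) * \<bar>2 * s * vj\<bar> = (\<epsilon>/2) * (2 * s) * (\<bar>vj\<bar> / (\<bar>vj\<bar> + 1))"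
          using s by (simp add: abs_mult field_simps)
        also have "\<dots> \<le> (\<epsilon>/2) * (2 * s) * 1"
          using s e by (intro mult_left_mono) auto
        finally show ?thesis by simp
      qed
      with B0 have B: "\<phi> (2 * s * vj) - f M - (2 * s) * (g i0 a0 b0 * vj) \<le> (\<epsilon>/2) * (2 * s)"
        unfolding phi0 by (simp add: abs_le_iff ac_simps)
      have phiE: "\<phi> (2 * s * vj) = f (\<lambda>i a b. M i a b + (2 * s) * E i a b)"
        unfolding \<phi>_def E_def by (intro arg_cong[of _ _ f] ext) auto
      have split: "(\<lambda>i a b. M i a b + s * V i a b)
          = (\<lambda>i a b. (1/2) * (M i a b + (2 * s) * V' i a b) + (1 - 1/2) * (M i a b + (2 * s) * E i a b))"
        unfolding V'_def E_def vj_def by (intro ext) (auto simp: algebra_simps)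
      have cv: "f (\<lambda>i a b. M i a b + s * V i a b)
          \<le> (1/2) * f (\<lambda>i a b. M i a b + (2 * s) * V' i a b) + (1 - 1/2) * f (\<lambda>i a b. M i a b + (2 * s) * E i a b)"
        unfolding split using cvx[rule_format, where \<theta>="1/2" and X="\<lambda>i a b. M i a b + (2 * s) * V' i a b"
          and Y="\<lambda>i a b. M i a b + (2 * s) * E i a b"] by simp
      have ipV: "ipg H m n g V = ipg H m n g V' + g i0 a0 b0 * vj"
      proof -
        have "V = (\<lambda>i a b. V' i a b + E i a b)" unfolding V'_def E_def vj_def by (intro ext) auto
        then have "ipg H m n g V = ipg H m n g (\<lambda>i a b. V' i a b + E i a b)" by simp
        also have "\<dots> = ipg H m n g V' + ipg H m n g E" by (rule ipg_add)
        also have "ipg H m n g E = g i0 a0 b0 * vj" unfolding E_def using ipg_single[OF jbox] .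
        finally show ?thesis .
      qed
      define fA where "fA = f (\<lambda>i a b. M i a b + (2 * s) * V' i a b)"
      define fB where "fB = f (\<lambda>i a b. M i a b + (2 * s) * E i a b)"
      define fV where "fV = f (\<lambda>i a b. M i a b + s * V i a b)"
      have A': "fA - f M - 2 * (s * ipg H m n g V') \<le> \<epsilon> * s" using A unfolding fA_def by (simp add: ac_simps)
      have B': "fB - f M - 2 * (s * (g i0 a0 b0 * vj)) \<le> \<epsilon> * s" using B phiE unfolding fB_def by (simp add: ac_simps)
      have cv': "fV \<le> fA / 2 + fB / 2" using cv unfolding fA_def fB_def fV_def by simp
      have eq: "s * ipg H m n g V = s * ipg H m n g V' + s * (g i0 a0 b0 * vj)" using ipV by (simp add: distrib_left)
      have "fV - f M - s * ipg H m n g V \<le> \<epsilon> * s" using A' B' cv' eq by linarith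
      then show ?thesis unfolding fV_def .
    qed
    then show "\<exists>\<delta>>0. \<forall>s. 0 < s \<and> s < \<delta> \<longrightarrow>
        f (\<lambda>i a b. M i a b + s * V i a b) - f M - s * ipg H m n g V \<le> \<epsilon> * s"
      using dpos by blast
  qed
qed

lemma grad_bound:
  fixes f :: "param \<Rightarrow> real"
  assumes cvx: "\<forall>X Y \<theta>. 0 \<le> \<theta> \<and> \<theta> \<le> 1 \<longrightarrow>
      f (\<lambda>i a b. \<theta> * X i a b + (1 - \<theta>) * Y i a b) \<le> \<theta> * f X + (1 - \<theta>) * f Y"
    and pg: "pgrad H m n f M g"
    and L0: "0 \<le> L"
    and lip: "\<forall>s. 0 < s \<and> s * frobp H m n g \<le> 1 \<longrightarrow> f (\<lambda>i a b. M i a b + s * g i a b) - f M \<le> s * (L * frobp H m n g)"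
  shows "frobp H m n g \<le> L"
proof -
  have vg: "valid_param H m n g" and pd: "\<forall>i\<in>{1..H}. \<forall>a<m. \<forall>b<n.
        ((\<lambda>s. f (\<lambda>i' a' b'. M i' a' b' + (if i' = i \<and> a' = a \<and> b' = b then s else 0)))
           has_real_derivative g i a b) (at 0)"
    using pg unfolding pgrad_def by auto
  define V where "V = (\<lambda>i a b. - g i a b)"
  have Vs: "\<forall>i a b. (i, a, b) \<notin> {1..H} \<times> {..<m} \<times> {..<n} \<longrightarrow> V i a b = 0"
    using vg unfolding V_def valid_param_def by auto
  have D: "\<forall>\<epsilon>>0. \<exists>\<delta>>0. \<forall>s. 0 < s \<and> s < \<delta> \<longrightarrow>
        f (\<lambda>i a b. M i a b + s * V i a b) - f M - s * ipg H m n g V \<le> \<epsilon> * s"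
  proof -
    have fb: "finite ({1..H} \<times> {..<m} \<times> {..<n})" by simp
    have "\<forall>V. (\<forall>i a b. (i, a, b) \<notin> {1..H} \<times> {..<m} \<times> {..<n} \<longrightarrow> V i a b = 0) \<longrightarrow>
     (\<forall>\<epsilon>>0. \<exists>\<delta>>0. \<forall>s. 0 < s \<and> s < \<delta> \<longrightarrow>
        f (\<lambda>i a b. M i a b + s * V i a b) - f M - s * ipg H m n g V \<le> \<epsilon> * s)"
      using dir_ind[OF cvx pd fb] by blast
    then show ?thesis using Vs by blast
  qed
  have ipV: "ipg H m n g V = - ipg H m n g g"
    using ipg_scale[of H m n g "-1" g] unfolding V_def by simp
  define q where "q = ipg H m n g g"
  have q: "q = (frobp H m n g)^2" unfolding q_def frobp_sq ..
  have key: "q \<le> L * frobp H m n g + \<epsilon>" if e: "\<epsilon> > 0" for \<epsilon>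
  proof -
    obtain \<delta> where d: "\<delta> > 0" and HD: "\<forall>s. 0 < s \<and> s < \<delta> \<longrightarrow>
        f (\<lambda>i a b. M i a b + s * V i a b) - f M - s * ipg H m n g V \<le> \<epsilon> * s"
      using D e by blast
    have nn: "0 \<le> frobp H m n g" unfolding frobp_def by (simp add: sum_nonneg)
    define s where "s = min (1 / (frobp H m n g + 1)) (\<delta>/2)"
    have s: "0 < s" "s < \<delta>" unfolding s_def using d nn by auto
    have "s * frobp H m n g \<le> (1 / (frobp H m n g + 1)) * frobp H m n g"
      unfolding s_def using nn by (intro mult_right_mono) auto
    also have "\<dots> \<le> 1" using nn by (simp add: field_simps)
    finally have s1: "s * frobp H m n g \<le> 1" .
    have A: "f (\<lambda>i a b. M i a b + s * V i a b) - f M + s * q \<le> \<epsilon> * s"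
      using HD s ipV unfolding q_def by auto
    have mid: "M = (\<lambda>i a b. (1/2) * (M i a b + s * g i a b) + (1 - 1/2) * (M i a b + s * V i a b))"
      unfolding V_def by (intro ext) (simp add: algebra_simps)
    have "f M \<le> (1/2) * f (\<lambda>i a b. M i a b + s * g i a b) + (1 - 1/2) * f (\<lambda>i a b. M i a b + s * V i a b)"
      by (subst mid) (use cvx[rule_format, where \<theta>="1/2" and X="\<lambda>i a b. M i a b + s * g i a b"
          and Y="\<lambda>i a b. M i a b + s * V i a b"] in simp)
    then have "2 * f M \<le> f (\<lambda>i a b. M i a b + s * g i a b) + f (\<lambda>i a b. M i a b + s * V i a b)" by simp
    moreover have "f (\<lambda>i a b. M i a b + s * g i a b) - f M \<le> s * (L * frobp H m n g)"
      using lip s s1 by simp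
    ultimately have "s * q \<le> s * (L * frobp H m n g) + \<epsilon> * s" using A by linarith
    then have "s * q \<le> s * (L * frobp H m n g + \<epsilon>)" by (simp add: algebra_simps)
    then show ?thesis using s by simp
  qed
  have "q \<le> L * frobp H m n g"
  proof (rule field_le_epsilon)
    fix e :: real assume "0 < e"
    then show "q \<le> L * frobp H m n g + e" by (rule key)
  qed
  then have sq: "(frobp H m n g)^2 \<le> L * frobp H m n g" using q by simp
  have nn: "0 \<le> frobp H m n g" unfolding frobp_def by (simp add: sum_nonneg)
  show ?thesis
  proof (cases "frobp H m n g = 0")
    case True then show ?thesis using L0 by simp
  next
    case False
    then have pos: "0 < frobp H m n g" using nn by simp
    have "frobp H m n g * frobp H m n g \<le> L * frobp H m n g" using sq by (simp only: power2_eq_square)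
    then show ?thesis using pos by (rule mult_right_le_imp_le)
  qed
qed


definition Ufeed :: "nat \<Rightarrow> nat \<Rightarrow> param \<Rightarrow> int \<Rightarrow> (nat \<Rightarrow> vecr) \<Rightarrow> vecr" where
  "Ufeed n H M t \<omega> = (\<lambda>a. \<Sum>k\<in>{1..2*H}. if k \<le> H then mvmul n (M k) (noise \<omega> (t - int k)) a else 0)"

definition X0 :: "nat \<Rightarrow> nat \<Rightarrow> matr \<Rightarrow> int \<Rightarrow> (nat \<Rightarrow> vecr) \<Rightarrow> vecr" where
  "X0 n H AK t \<omega> = (\<lambda>r. \<Sum>k\<in>{1..2*H}. mvmul n (P0 n H AK k) (noise \<omega> (t - int k)) r)"

definition XL :: "nat \<Rightarrow> nat \<Rightarrow> nat \<Rightarrow> matr \<Rightarrow> matr \<Rightarrow> param \<Rightarrow> int \<Rightarrow> (nat \<Rightarrow> vecr) \<Rightarrow> vecr" where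
  "XL n m H AK B M t \<omega> = (\<lambda>r. \<Sum>k\<in>{1..2*H}. mvmul n (PhiLh n m H AK B (\<lambda>_. M) t k) (noise \<omega> (t - int k)) r)"

definition SV :: "nat \<Rightarrow> nat \<Rightarrow> nat \<Rightarrow> param \<Rightarrow> real" where
  "SV m n H V = (\<Sum>j\<in>{1..H}. frobm m n (V j))"

lemma xtil_split: "xtil n m H AK B M t \<omega> = (\<lambda>r. X0 n H AK t \<omega> r + XL n m H AK B M t \<omega> r)"
  unfolding xtil_def X0_def XL_def Phix_split mvmul_def
  by (simp add: distrib_right sum.distrib)

lemma util_eq: "util n m H AK B K M t \<omega> = (\<lambda>a. Ufeed n H M t \<omega> a - mvmul n K (xtil n m H AK B M t \<omega>) a)"
proof
  fix a
  let ?w = "\<lambda>k. noise \<omega> (t - int k)"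
  let ?F = "\<lambda>k. Phix n m H AK B (\<lambda>_. M) t k"
  have "util n m H AK B K M t \<omega> a = (\<Sum>k\<in>{1..2*H}. \<Sum>b<n. (if k \<le> H then M k a b else 0) * ?w k b)
      - (\<Sum>k\<in>{1..2*H}. \<Sum>b<n. mmul n K (?F k) a b * ?w k b)"
    unfolding util_def Phiu_def by (simp add: left_diff_distrib sum_subtractf)
  also have "(\<Sum>k\<in>{1..2*H}. \<Sum>b<n. (if k \<le> H then M k a b else 0) * ?w k b) = Ufeed n H M t \<omega> a"
    unfolding Ufeed_def mvmul_def by (intro sum.cong refl) auto
  also have "(\<Sum>k\<in>{1..2*H}. \<Sum>b<n. mmul n K (?F k) a b * ?w k b) = mvmul n K (xtil n m H AK B M t \<omega>) a"
  proof -
    have "(\<Sum>k\<in>{1..2*H}. \<Sum>b<n. mmul n K (?F k) a b * ?w k b)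
        = (\<Sum>k\<in>{1..2*H}. \<Sum>b<n. \<Sum>l<n. K a l * (?F k l b * ?w k b))"
      unfolding mmul_def by (simp add: sum_distrib_right mult.assoc)
    also have "\<dots> = (\<Sum>k\<in>{1..2*H}. \<Sum>l<n. \<Sum>b<n. K a l * (?F k l b * ?w k b))"
      by (intro sum.cong refl sum.swap)
    also have "\<dots> = (\<Sum>l<n. \<Sum>k\<in>{1..2*H}. \<Sum>b<n. K a l * (?F k l b * ?w k b))"
      by (rule sum.swap)
    also have "\<dots> = mvmul n K (xtil n m H AK B M t \<omega>) a"
      unfolding mvmul_def xtil_def by (simp add: sum_distrib_left)
    finally show ?thesis .
  qed
  finally show "util n m H AK B K M t \<omega> a = Ufeed n H M t \<omega> a - mvmul n K (xtil n m H AK B M t \<omega>) a" .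
qed

lemma mvmul_lin: "mvmul n (\<lambda>a b. \<alpha> * X a b + \<beta> * Y a b) w r = \<alpha> * mvmul n X w r + \<beta> * mvmul n Y w r"
  unfolding mvmul_def by (simp add: sum.distrib sum_distrib_left algebra_simps)

lemma XL_lin: "XL n m H AK B (\<lambda>i a b. \<alpha> * M1 i a b + \<beta> * M2 i a b) t \<omega> r
    = \<alpha> * XL n m H AK B M1 t \<omega> r + \<beta> * XL n m H AK B M2 t \<omega> r"
proof -
  have "\<And>k. PhiLh n m H AK B (\<lambda>_ i a b. \<alpha> * M1 i a b + \<beta> * M2 i a b) t k
      = (\<lambda>r b. \<alpha> * PhiLh n m H AK B (\<lambda>_. M1) t k r b + \<beta> * PhiLh n m H AK B (\<lambda>_. M2) t k r b)"
    using PhiLh_lin[where hA="\<lambda>_. M1" and hB="\<lambda>_. M2"] by (intro ext) simp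
  then show ?thesis unfolding XL_def
    by (simp add: mvmul_lin sum.distrib sum_distrib_left)
qed

lemma Ufeed_lin: "Ufeed n H (\<lambda>i a b. \<alpha> * M1 i a b + \<beta> * M2 i a b) t \<omega> r
    = \<alpha> * Ufeed n H M1 t \<omega> r + \<beta> * Ufeed n H M2 t \<omega> r"
proof -
  have "Ufeed n H (\<lambda>i a b. \<alpha> * M1 i a b + \<beta> * M2 i a b) t \<omega> r
     = (\<Sum>k\<in>{1..2*H}. \<alpha> * (if k \<le> H then mvmul n (M1 k) (noise \<omega> (t - int k)) r else 0)
          + \<beta> * (if k \<le> H then mvmul n (M2 k) (noise \<omega> (t - int k)) r else 0))"
    unfolding Ufeed_def by (intro sum.cong refl) (simp add: mvmul_lin)
  then show ?thesis unfolding Ufeed_def by (simp add: sum.distrib sum_distrib_left)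
qed

lemma mvmul_lin_vec: "mvmul n K (\<lambda>r. \<alpha> * x r + \<beta> * y r) a = \<alpha> * mvmul n K x a + \<beta> * mvmul n K y a"
  unfolding mvmul_def by (simp add: sum.distrib sum_distrib_left algebra_simps)

lemma xtil_comb:
  assumes "\<alpha> + \<beta> = 1"
  shows "xtil n m H AK B (\<lambda>i a b. \<alpha> * M1 i a b + \<beta> * M2 i a b) t \<omega>
    = (\<lambda>r. \<alpha> * xtil n m H AK B M1 t \<omega> r + \<beta> * xtil n m H AK B M2 t \<omega> r)"
proof -
  have "X0 n H AK t \<omega> r = \<alpha> * X0 n H AK t \<omega> r + \<beta> * X0 n H AK t \<omega> r" for r
    using assms by (metis distrib_right mult_1)
  then show ?thesis unfolding xtil_split XL_lin by (intro ext) (simp add: algebra_simps)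
qed

lemma util_comb:
  assumes "\<alpha> + \<beta> = 1"
  shows "util n m H AK B K (\<lambda>i a b. \<alpha> * M1 i a b + \<beta> * M2 i a b) t \<omega>
    = (\<lambda>r. \<alpha> * util n m H AK B K M1 t \<omega> r + \<beta> * util n m H AK B K M2 t \<omega> r)"
  unfolding util_eq xtil_comb[OF assms] Ufeed_lin mvmul_lin_vec by (intro ext) (simp add: algebra_simps)

lemma xtil_pert: "xtil n m H AK B (\<lambda>i a b. M i a b + s * V i a b) t \<omega>
    = (\<lambda>r. xtil n m H AK B M t \<omega> r + s * XL n m H AK B V t \<omega> r)"
  using XL_lin[of n m H AK B 1 M s V t \<omega>] unfolding xtil_split by (intro ext) simp

lemma util_pert: "util n m H AK B K (\<lambda>i a b. M i a b + s * V i a b) t \<omega>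
    = (\<lambda>a. util n m H AK B K M t \<omega> a + s * (Ufeed n H V t \<omega> a - mvmul n K (XL n m H AK B V t \<omega>) a))"
proof -
  have "\<And>a. Ufeed n H (\<lambda>i a b. M i a b + s * V i a b) t \<omega> a = Ufeed n H M t \<omega> a + s * Ufeed n H V t \<omega> a"
    using Ufeed_lin[of n H 1 M s V t \<omega>] by simp
  moreover have "\<And>a. mvmul n K (\<lambda>r. xtil n m H AK B M t \<omega> r + s * XL n m H AK B V t \<omega> r) a
      = mvmul n K (xtil n m H AK B M t \<omega>) a + s * mvmul n K (XL n m H AK B V t \<omega>) a"
    using mvmul_lin_vec[of n K 1 _ s] by simp
  ultimately show ?thesis unfolding util_eq xtil_pert by (intro ext) (simp add: algebra_simps)
qed

lemma frobm_nonneg[simp]: "0 \<le> frobm r c X"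
  unfolding frobm_def by (simp add: sum_nonneg)

lemma noise_norm:
  assumes wb: "\<And>s b. b < n \<Longrightarrow> \<bar>noise \<omega> s b\<bar> \<le> wbar" and w0: "0 \<le> wbar"
  shows "vnorm2 n (noise \<omega> s) \<le> sqrt (real n) * wbar"
  by (rule vnorm2_le_bound) (use wb w0 in auto)

lemma reindex_le:
  fixes H :: nat and F :: "nat \<Rightarrow> real"
  assumes i: "1 \<le> i" and F: "\<And>j. 0 \<le> F j"
  shows "(\<Sum>k\<in>{1..2*H}. if i < k \<and> k - i \<le> H then F (k - i) else 0) \<le> (\<Sum>j\<in>{1..H}. F j)"
proof -
  let ?A = "{k \<in> {1..2*H}. i < k \<and> k - i \<le> H}"
  have "(\<Sum>k\<in>{1..2*H}. if i < k \<and> k - i \<le> H then F (k - i) else 0) = (\<Sum>k\<in>?A. F (k - i))"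
    by (simp add: sum.inter_filter[symmetric])
  also have "\<dots> = (\<Sum>j\<in>(\<lambda>k. k - i) ` ?A. F j)"
    by (subst sum.reindex) (auto simp: inj_on_def)
  also have "\<dots> \<le> (\<Sum>j\<in>{1..H}. F j)"
    by (intro sum_mono2) (use F in auto)
  finally show ?thesis .
qed

lemma sum_if_le: fixes H :: nat shows "(\<Sum>k\<in>{1..2*H}. if k \<le> H then F k else (0::real)) = (\<Sum>k\<in>{1..H}. F k)"
proof -
  have "(\<Sum>k\<in>{1..2*H}. if k \<le> H then F k else (0::real)) = (\<Sum>k\<in>{k\<in>{1..2*H}. k \<le> H}. F k)"
    by (simp add: sum.inter_filter[symmetric])
  also have "{k\<in>{1..2*H}. k \<le> H} = {1..H}" by auto
  finally show ?thesis .
qed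

lemma X0_bound:
  assumes oA: "\<And>j. opb n n (mpow n AK j) (\<kappa>^2 * (1-\<gamma>)^j)"
    and g: "0 < \<gamma>" "\<gamma> < 1" and k0: "0 \<le> \<kappa>"
    and wb: "\<And>s b. b < n \<Longrightarrow> \<bar>noise \<omega> s b\<bar> \<le> wbar" and w0: "0 \<le> wbar"
  shows "vnorm2 n (X0 n H AK t \<omega>) \<le> \<kappa>^2 * (sqrt (real n) * wbar) / \<gamma>"
proof -
  have "vnorm2 n (X0 n H AK t \<omega>) \<le> (\<Sum>k\<in>{1..2*H}. vnorm2 n (mvmul n (P0 n H AK k) (noise \<omega> (t - int k))))"
    unfolding X0_def by (rule vnorm2_sum) simp
  also have "\<dots> \<le> (\<Sum>k\<in>{1..2*H}. \<kappa>^2 * (sqrt (real n) * wbar) * (1-\<gamma>)^(k-1))"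
  proof (rule sum_mono)
    fix k
    show "vnorm2 n (mvmul n (P0 n H AK k) (noise \<omega> (t - int k))) \<le> \<kappa>^2 * (sqrt (real n) * wbar) * (1-\<gamma>)^(k-1)"
    proof (cases "k \<le> H")
      case True
      have "vnorm2 n (mvmul n (mpow n AK (k-1)) (noise \<omega> (t - int k))) \<le> \<kappa>^2 * (1-\<gamma>)^(k-1) * vnorm2 n (noise \<omega> (t - int k))"
        using oA by (rule opbD)
      also have "\<dots> \<le> \<kappa>^2 * (1-\<gamma>)^(k-1) * (sqrt (real n) * wbar)"
        using noise_norm[OF wb w0] g by (intro mult_left_mono) auto
      finally show ?thesis using True unfolding P0_vec by (simp add: ac_simps)
    next
      case False
      then show ?thesis unfolding P0_vec using g w0 by (simp add: vnorm2_def)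
    qed
  qed
  also have "\<dots> = \<kappa>^2 * (sqrt (real n) * wbar) * (\<Sum>k\<in>{1..2*H}. (1-\<gamma>)^(k-1))"
    by (simp add: sum_distrib_left)
  also have "\<dots> \<le> \<kappa>^2 * (sqrt (real n) * wbar) * (1 / (1 - (1-\<gamma>)))"
    using geo_sum[of "1-\<gamma>" "2*H"] g w0 by (intro mult_left_mono) auto
  finally show ?thesis by simp
qed

lemma XL_bound:
  assumes oA: "\<And>j. opb n n (mpow n AK j) (\<kappa>^2 * (1-\<gamma>)^j)" and oB: "opb n m B \<kappa>B"
    and g: "0 < \<gamma>" "\<gamma> < 1" and k0: "0 \<le> \<kappa>" "0 \<le> \<kappa>B"
    and wb: "\<And>s b. b < n \<Longrightarrow> \<bar>noise \<omega> s b\<bar> \<le> wbar" and w0: "0 \<le> wbar"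
  shows "vnorm2 n (XL n m H AK B V t \<omega>) \<le> \<kappa>^2 * \<kappa>B * (sqrt (real n) * wbar) / \<gamma> * SV m n H V"
proof -
  define C where "C = \<kappa>^2 * \<kappa>B * (sqrt (real n) * wbar)"
  have C0: "0 \<le> C" unfolding C_def using k0 w0 by simp
  have "vnorm2 n (XL n m H AK B V t \<omega>) \<le> (\<Sum>k\<in>{1..2*H}. vnorm2 n (mvmul n (PhiLh n m H AK B (\<lambda>_. V) t k) (noise \<omega> (t - int k))))"
    unfolding XL_def by (rule vnorm2_sum) simp
  also have "\<dots> \<le> (\<Sum>k\<in>{1..2*H}. \<Sum>i\<in>{1..H}. if i < k \<and> k - i \<le> H then C * (1-\<gamma>)^(i-1) * frobm m n (V (k - i)) else 0)"
  proof (rule sum_mono)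
    fix k
    have "vnorm2 n (mvmul n (PhiLh n m H AK B (\<lambda>_. V) t k) (noise \<omega> (t - int k)))
        \<le> (\<Sum>i\<in>{1..H}. if i < k \<and> k - i \<le> H
          then \<kappa>^2 * (1-\<gamma>)^(i-1) * \<kappa>B * vnorm2 m (mvmul n (V (k - i)) (noise \<omega> (t - int k))) else 0)"
      by (rule PhiLh_bound[OF oA oB k0(2) k0(1)]) (use g in simp)
    also have "\<dots> \<le> (\<Sum>i\<in>{1..H}. if i < k \<and> k - i \<le> H then C * (1-\<gamma>)^(i-1) * frobm m n (V (k - i)) else 0)"
    proof (rule sum_mono)
      fix i
      have "vnorm2 m (mvmul n (V (k - i)) (noise \<omega> (t - int k))) \<le> frobm m n (V (k - i)) * vnorm2 n (noise \<omega> (t - int k))"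
        by (rule mvmul_frob)
      also have "\<dots> \<le> frobm m n (V (k - i)) * (sqrt (real n) * wbar)"
        using noise_norm[OF wb w0] by (intro mult_left_mono) auto
      finally have "\<kappa>^2 * (1-\<gamma>)^(i-1) * \<kappa>B * vnorm2 m (mvmul n (V (k - i)) (noise \<omega> (t - int k)))
          \<le> \<kappa>^2 * (1-\<gamma>)^(i-1) * \<kappa>B * (frobm m n (V (k - i)) * (sqrt (real n) * wbar))"
        using g k0 by (intro mult_left_mono) auto
      then show "(if i < k \<and> k - i \<le> H
          then \<kappa>^2 * (1-\<gamma>)^(i-1) * \<kappa>B * vnorm2 m (mvmul n (V (k - i)) (noise \<omega> (t - int k))) else 0)
        \<le> (if i < k \<and> k - i \<le> H then C * (1-\<gamma>)^(i-1) * frobm m n (V (k - i)) else 0)"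
        unfolding C_def by (simp add: ac_simps)
    qed
    finally show "vnorm2 n (mvmul n (PhiLh n m H AK B (\<lambda>_. V) t k) (noise \<omega> (t - int k)))
        \<le> (\<Sum>i\<in>{1..H}. if i < k \<and> k - i \<le> H then C * (1-\<gamma>)^(i-1) * frobm m n (V (k - i)) else 0)" .
  qed
  also have "\<dots> = (\<Sum>i\<in>{1..H}. C * (1-\<gamma>)^(i-1) * (\<Sum>k\<in>{1..2*H}. if i < k \<and> k - i \<le> H then frobm m n (V (k - i)) else 0))"
    by (subst sum.swap) (simp add: sum_distrib_left if_distrib cong: if_cong)
  also have "\<dots> \<le> (\<Sum>i\<in>{1..H}. C * (1-\<gamma>)^(i-1) * SV m n H V)"
  proof (rule sum_mono)
    fix i assume i: "i \<in> {1..H}"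
    have "(\<Sum>k\<in>{1..2*H}. if i < k \<and> k - i \<le> H then frobm m n (V (k - i)) else 0) \<le> SV m n H V"
      unfolding SV_def by (rule reindex_le) (use i in auto)
    then show "C * (1-\<gamma>)^(i-1) * (\<Sum>k\<in>{1..2*H}. if i < k \<and> k - i \<le> H then frobm m n (V (k - i)) else 0)
        \<le> C * (1-\<gamma>)^(i-1) * SV m n H V"
      using C0 g by (intro mult_left_mono) auto
  qed
  also have "\<dots> = C * SV m n H V * (\<Sum>i\<in>{1..H}. (1-\<gamma>)^(i-1))"
    by (simp add: sum_distrib_left ac_simps)
  also have "\<dots> \<le> C * SV m n H V * (1 / (1 - (1-\<gamma>)))"
  proof (rule mult_left_mono)
    show "(\<Sum>i\<in>{1..H}. (1-\<gamma>)^(i-1)) \<le> 1 / (1 - (1-\<gamma>))" using geo_sum[of "1-\<gamma>" H] g by simp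
    show "0 \<le> C * SV m n H V" using C0 unfolding SV_def frobm_def by (simp add: sum_nonneg)
  qed
  finally show ?thesis unfolding C_def by simp
qed

lemma Ufeed_bound:
  assumes wb: "\<And>s b. b < n \<Longrightarrow> \<bar>noise \<omega> s b\<bar> \<le> wbar" and w0: "0 \<le> wbar"
  shows "vnorm2 m (Ufeed n H V t \<omega>) \<le> sqrt (real n) * wbar * SV m n H V"
proof -
  have "vnorm2 m (Ufeed n H V t \<omega>) \<le> (\<Sum>k\<in>{1..2*H}. if k \<le> H then vnorm2 m (mvmul n (V k) (noise \<omega> (t - int k))) else 0)"
    unfolding Ufeed_def by (rule vnorm2_sum_if) simp
  also have "\<dots> \<le> (\<Sum>k\<in>{1..2*H}. if k \<le> H then frobm m n (V k) * (sqrt (real n) * wbar) else 0)"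
  proof (rule sum_mono)
    fix k
    have "vnorm2 m (mvmul n (V k) (noise \<omega> (t - int k))) \<le> frobm m n (V k) * vnorm2 n (noise \<omega> (t - int k))"
      by (rule mvmul_frob)
    also have "\<dots> \<le> frobm m n (V k) * (sqrt (real n) * wbar)"
      using noise_norm[OF wb w0] by (intro mult_left_mono) auto
    finally show "(if k \<le> H then vnorm2 m (mvmul n (V k) (noise \<omega> (t - int k))) else 0)
        \<le> (if k \<le> H then frobm m n (V k) * (sqrt (real n) * wbar) else 0)" by simp
  qed
  also have "\<dots> = (\<Sum>k\<in>{1..H}. frobm m n (V k) * (sqrt (real n) * wbar))" by (rule sum_if_le)
  also have "\<dots> = sqrt (real n) * wbar * SV m n H V" unfolding SV_def by (simp add: sum_distrib_left ac_simps)
  finally show ?thesis .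
qed


lemma frobm_L2: "frobm r c X = L2_set (\<lambda>p. X (fst p) (snd p)) ({..<r} \<times> {..<c})"
  unfolding frobm_def L2_set_def by (simp add: sum.cartesian_product case_prod_beta)

lemma frobm_pert: "frobm r c (\<lambda>a b. X a b + s * Y a b) \<le> frobm r c X + \<bar>s\<bar> * frobm r c Y"
proof -
  have "frobm r c (\<lambda>a b. X a b + s * Y a b) \<le> frobm r c X + frobm r c (\<lambda>a b. s * Y a b)"
    unfolding frobm_L2 by (rule L2_set_triangle_ineq)
  also have "frobm r c (\<lambda>a b. s * Y a b) = \<bar>s\<bar> * frobm r c Y"
    unfolding frobm_def by (simp add: power_mult_distrib sum_distrib_left[symmetric] real_sqrt_mult)
  finally show ?thesis .
qed

lemma SV_nonneg: "0 \<le> SV m n H V"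
  unfolding SV_def by (simp add: sum_nonneg)

lemma SV_pert: "SV m n H (\<lambda>i a b. M i a b + s * V i a b) \<le> SV m n H M + \<bar>s\<bar> * SV m n H V"
  unfolding SV_def by (simp add: sum_distrib_left sum.distrib[symmetric] frobm_pert sum_mono)

lemma SV_frobp: "SV m n H V \<le> sqrt (real H) * frobp H m n V"
proof -
  have "SV m n H V = (\<Sum>j\<in>{1..H}. \<bar>frobm m n (V j)\<bar>)" unfolding SV_def by simp
  also have "\<dots> \<le> sqrt (real (card {1..H})) * L2_set (\<lambda>j. frobm m n (V j)) {1..H}"
    by (rule sum_le_sqrt_card)
  also have "L2_set (\<lambda>j. frobm m n (V j)) {1..H} = frobp H m n V"
    unfolding L2_set_def frobp_def frobm_def by (simp add: sum_nonneg)
  finally show ?thesis by simp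
qed

lemma frobm_inf: "frobm m n X \<le> sqrt (real m) * inf_norm m n X"
proof -
  have row: "(\<Sum>b<n. (X a b)^2) \<le> (inf_norm m n X)^2" if a: "a < m" for a
  proof -
    have "sqrt (\<Sum>b<n. (X a b)^2) \<le> (\<Sum>b<n. \<bar>X a b\<bar>)"
      using L2_set_le_sum_abs[of "X a" "{..<n}"] unfolding L2_set_def .
    also have "\<dots> \<le> inf_norm m n X" unfolding inf_norm_def
      using a by (intro Max_ge) auto
    finally have "sqrt (\<Sum>b<n. (X a b)^2) \<le> inf_norm m n X" .
    then show ?thesis
      by (metis real_sqrt_le_iff real_sqrt_pow2_iff sum_nonneg zero_le_power2 power2_le_imp_le real_sqrt_ge_zero power_mono)
  qed
  have "(\<Sum>a<m. \<Sum>b<n. (X a b)^2) \<le> (\<Sum>a<m. (inf_norm m n X)^2)" by (intro sum_mono row) auto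
  then have "frobm m n X \<le> sqrt (real m * (inf_norm m n X)^2)" unfolding frobm_def by simp
  also have "\<dots> = sqrt (real m) * \<bar>inf_norm m n X\<bar>" by (simp add: real_sqrt_mult)
  also have "\<bar>inf_norm m n X\<bar> = inf_norm m n X"
  proof -
    have "0 \<le> inf_norm m n X" unfolding inf_norm_def by (intro Max_ge_iff[THEN iffD2]) auto
    then show ?thesis by simp
  qed
  finally show ?thesis .
qed

lemma SV_Mset:
  assumes M: "M \<in> Mset n m H \<kappa> \<gamma>" and g: "0 < \<gamma>" "\<gamma> < 1" and k: "0 \<le> \<kappa>"
  shows "SV m n H M \<le> 2 * sqrt (real n) * \<kappa>^3 * sqrt (real m) / \<gamma>"
proof -
  have "SV m n H M \<le> (\<Sum>j\<in>{1..H}. sqrt (real m) * (2 * sqrt (real n) * \<kappa>^3 * (1 - \<gamma>)^(j - 1)))"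
    unfolding SV_def
  proof (rule sum_mono)
    fix j assume j: "j \<in> {1..H}"
    have "frobm m n (M j) \<le> sqrt (real m) * inf_norm m n (M j)" by (rule frobm_inf)
    also have "\<dots> \<le> sqrt (real m) * (2 * sqrt (real n) * \<kappa>^3 * (1 - \<gamma>)^(j - 1))"
      using M j unfolding Mset_def by (intro mult_left_mono) auto
    finally show "frobm m n (M j) \<le> sqrt (real m) * (2 * sqrt (real n) * \<kappa>^3 * (1 - \<gamma>)^(j - 1))" .
  qed
  also have "\<dots> = sqrt (real m) * (2 * sqrt (real n) * \<kappa>^3) * (\<Sum>j\<in>{1..H}. (1 - \<gamma>)^(j - 1))"
    by (simp add: sum_distrib_left ac_simps)
  also have "\<dots> \<le> sqrt (real m) * (2 * sqrt (real n) * \<kappa>^3) * (1 / (1 - (1 - \<gamma>)))"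
    using geo_sum[of "1-\<gamma>" H] g k by (intro mult_left_mono) auto
  finally show ?thesis by (simp add: ac_simps)
qed

lemma noise_meas[measurable]: "(\<lambda>\<omega>. noise \<omega> s b) \<in> borel_measurable (Pi\<^sub>M UNIV (\<lambda>_. vecM))"
proof (cases "s < 0")
  case True
  then show ?thesis unfolding noise_def by simp
next
  case False
  have "(\<lambda>\<omega>::nat \<Rightarrow> vecr. \<omega> (nat s)) \<in> measurable (Pi\<^sub>M UNIV (\<lambda>_. vecM)) vecM" by measurable
  moreover have "(\<lambda>x::vecr. x b) \<in> borel_measurable vecM" unfolding vecM_def by measurable
  ultimately have "(\<lambda>\<omega>::nat \<Rightarrow> vecr. \<omega> (nat s) b) \<in> borel_measurable (Pi\<^sub>M UNIV (\<lambda>_. vecM))"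
    by (rule measurable_compose)
  then show ?thesis using False unfolding noise_def by simp
qed

lemma xtil_meas[measurable]: "(\<lambda>\<omega>. xtil n m H AK B M t \<omega> r) \<in> borel_measurable (Pi\<^sub>M UNIV (\<lambda>_. vecM))"
  unfolding xtil_def by measurable

lemma util_meas[measurable]: "(\<lambda>\<omega>. util n m H AK B K M t \<omega> r) \<in> borel_measurable (Pi\<^sub>M UNIV (\<lambda>_. vecM))"
  unfolding util_def by measurable

lemma integrand_meas:
  assumes cm: "cost_model n m G c"
  shows "(\<lambda>\<omega>. c t' (xtil n m H AK B M t \<omega>) (util n m H AK B K M t \<omega>)) \<in> borel_measurable (Pi\<^sub>M UNIV (\<lambda>_. vecM))"
proof -
  define Z where "Z = (\<lambda>\<omega> j. if even j then xtil n m H AK B M t \<omega> (j div 2) else util n m H AK B K M t \<omega> (j div 2))"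
  have "Z \<in> measurable (Pi\<^sub>M UNIV (\<lambda>_. vecM)) (Pi\<^sub>M UNIV (\<lambda>_. (borel :: real measure)))"
    unfolding Z_def by (rule measurable_PiM_single') auto
  from measurable_compose[OF this cost_meas[OF cm, of t']]
  have "(\<lambda>\<omega>. c t' (\<lambda>i. Z \<omega> (2*i)) (\<lambda>j. Z \<omega> (2*j+1))) \<in> borel_measurable (Pi\<^sub>M UNIV (\<lambda>_. vecM))" .
  moreover have "(\<lambda>i. Z \<omega> (2*i)) = xtil n m H AK B M t \<omega>" for \<omega> unfolding Z_def by auto
  moreover have "(\<lambda>j. Z \<omega> (2*j+1)) = util n m H AK B K M t \<omega>" for \<omega> unfolding Z_def by auto
  ultimately show ?thesis by simp
qed


locale ctx =
  fixes n m H :: nat and AK B K :: matr and \<kappa> \<gamma> \<kappa>B wbar G :: real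
    and c :: "nat \<Rightarrow> vecr \<Rightarrow> vecr \<Rightarrow> real" and P :: "(nat \<Rightarrow> vecr) measure" and t :: nat
  assumes oA: "\<And>j. opb n n (mpow n AK j) (\<kappa>^2 * (1-\<gamma>)^j)"
    and oB: "opb n m B \<kappa>B" and oK: "opb m n K \<kappa>"
    and kpos: "1 \<le> \<kappa>" and kB: "1 \<le> \<kappa>B" and g0: "0 < \<gamma>" and g1: "\<gamma> < 1"
    and wpos: "0 < wbar" and Gpos: "0 < G"
    and cm: "cost_model n m G c" and nm: "noise_model n wbar P"
begin

definition cX0 where "cX0 = \<kappa>^2 * (sqrt (real n) * wbar) / \<gamma>"
definition cXL where "cXL = \<kappa>^2 * \<kappa>B * (sqrt (real n) * wbar) / \<gamma>"
definition cUF where "cUF = sqrt (real n) * wbar"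
definition RX where "RX \<sigma> = cX0 + cXL * \<sigma>"
definition Rb where "Rb \<sigma> = (1 + \<kappa>) * RX \<sigma> + cUF * \<sigma>"
definition cD where "cD = cXL + cUF + \<kappa> * cXL"

lemma consts_nonneg: "0 \<le> cX0" "0 \<le> cXL" "0 \<le> cUF" "0 \<le> cD"
  using kpos kB g0 wpos unfolding cX0_def cXL_def cUF_def cD_def by auto

lemma RX_nonneg: "0 \<le> \<sigma> \<Longrightarrow> 0 \<le> RX \<sigma>"
  unfolding RX_def using consts_nonneg by simp

lemma Rb_mono: "0 \<le> \<sigma> \<Longrightarrow> \<sigma> \<le> \<sigma>' \<Longrightarrow> Rb \<sigma> \<le> Rb \<sigma>'"
  unfolding Rb_def RX_def using consts_nonneg kpos
  by (intro add_mono mult_left_mono) (auto intro: mult_left_mono)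

lemma Rb_nonneg: "0 \<le> \<sigma> \<Longrightarrow> 0 \<le> Rb \<sigma>"
  unfolding Rb_def using RX_nonneg[of \<sigma>] consts_nonneg kpos by simp

lemma ps: "prob_space P" using nm unfolding noise_model_def by blast

lemma setsP: "sets P = sets (Pi\<^sub>M UNIV (\<lambda>_. vecM))" using nm unfolding noise_model_def by blast

lemma AEw: "AE \<omega> in P. \<forall>s b. b < n \<longrightarrow> \<bar>noise \<omega> s b\<bar> \<le> wbar"
proof -
  have "AE \<omega> in P. \<forall>t. \<forall>b<n. \<bar>\<omega> t b\<bar> \<le> wbar" using nm unfolding noise_model_def by blast
  then show ?thesis
    by (rule AE_mp) (intro AE_I2 impI allI, auto simp: noise_def less_imp_le[OF wpos])
qed

lemma bndX:
  assumes wb0: "\<forall>s b. b < n \<longrightarrow> \<bar>noise \<omega> s b\<bar> \<le> wbar"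
  shows "vnorm2 n (xtil n m H AK B M (int t) \<omega>) \<le> RX (SV m n H M)"
proof -
  have wb: "\<And>s b. b < n \<Longrightarrow> \<bar>noise \<omega> s b\<bar> \<le> wbar" using wb0 by blast
  have "vnorm2 n (xtil n m H AK B M (int t) \<omega>) \<le> vnorm2 n (X0 n H AK (int t) \<omega>) + vnorm2 n (XL n m H AK B M (int t) \<omega>)"
    unfolding xtil_split by (rule vnorm2_add)
  also have "\<dots> \<le> cX0 + cXL * SV m n H M"
    using X0_bound[OF oA g0 g1 _ wb] XL_bound[OF oA oB g0 g1 _ _ wb] kpos kB wpos
    unfolding cX0_def cXL_def by (intro add_mono) (auto simp: ac_simps)
  finally show ?thesis unfolding RX_def .
qed

lemma bndU:
  assumes wb0: "\<forall>s b. b < n \<longrightarrow> \<bar>noise \<omega> s b\<bar> \<le> wbar"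
  shows "vnorm2 m (util n m H AK B K M (int t) \<omega>) \<le> cUF * SV m n H M + \<kappa> * RX (SV m n H M)"
proof -
  have wb: "\<And>s b. b < n \<Longrightarrow> \<bar>noise \<omega> s b\<bar> \<le> wbar" using wb0 by blast
  have "vnorm2 m (util n m H AK B K M (int t) \<omega>) \<le> vnorm2 m (Ufeed n H M (int t) \<omega>) + vnorm2 m (mvmul n K (xtil n m H AK B M (int t) \<omega>))"
    unfolding util_eq by (rule vnorm2_diff)
  also have "\<dots> \<le> cUF * SV m n H M + \<kappa> * RX (SV m n H M)"
  proof (rule add_mono)
    show "vnorm2 m (Ufeed n H M (int t) \<omega>) \<le> cUF * SV m n H M"
      unfolding cUF_def using Ufeed_bound[OF wb] wpos by simp
    have "vnorm2 m (mvmul n K (xtil n m H AK B M (int t) \<omega>)) \<le> \<kappa> * vnorm2 n (xtil n m H AK B M (int t) \<omega>)"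
      using oK by (rule opbD)
    also have "\<dots> \<le> \<kappa> * RX (SV m n H M)" using bndX[OF wb0] kpos by (intro mult_left_mono) auto
    finally show "vnorm2 m (mvmul n K (xtil n m H AK B M (int t) \<omega>)) \<le> \<kappa> * RX (SV m n H M)" .
  qed
  finally show ?thesis .
qed

lemma bndXR:
  assumes wb: "\<forall>s b. b < n \<longrightarrow> \<bar>noise \<omega> s b\<bar> \<le> wbar"
  shows "vnorm2 n (xtil n m H AK B M (int t) \<omega>) \<le> Rb (SV m n H M)"
proof -
  have "RX (SV m n H M) \<le> Rb (SV m n H M)"
    unfolding Rb_def using RX_nonneg[OF SV_nonneg] SV_nonneg consts_nonneg kpos
    by (simp add: distrib_right)
  then show ?thesis using bndX[OF wb, of M] by linarith
qed

lemma bndUR: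
  assumes wb: "\<forall>s b. b < n \<longrightarrow> \<bar>noise \<omega> s b\<bar> \<le> wbar"
  shows "vnorm2 m (util n m H AK B K M (int t) \<omega>) \<le> Rb (SV m n H M)"
proof -
  have "cUF * SV m n H M + \<kappa> * RX (SV m n H M) \<le> Rb (SV m n H M)"
    unfolding Rb_def using RX_nonneg[OF SV_nonneg] SV_nonneg consts_nonneg kpos
    by (simp add: distrib_right)
  then show ?thesis using bndU[OF wb, of M] by linarith
qed

lemma integ: "integrable P (\<lambda>\<omega>. c t (xtil n m H AK B M (int t) \<omega>) (util n m H AK B K M (int t) \<omega>))"
proof -
  interpret prob_space P by (rule ps)
  define b where "b = Rb (SV m n H M)"
  have meas: "(\<lambda>\<omega>. c t (xtil n m H AK B M (int t) \<omega>) (util n m H AK B K M (int t) \<omega>)) \<in> borel_measurable P"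
    using integrand_meas[OF cm] measurable_cong_sets[OF setsP refl] by blast
  have "AE \<omega> in P. norm (c t (xtil n m H AK B M (int t) \<omega>) (util n m H AK B K M (int t) \<omega>))
      \<le> \<bar>c t (\<lambda>_. 0) (\<lambda>_. 0)\<bar> + G * b * (b + b)"
    using AEw
  proof (rule AE_mp, intro AE_I2 impI)
    fix \<omega> assume wb: "\<forall>s b. b < n \<longrightarrow> \<bar>noise \<omega> s b\<bar> \<le> wbar"
    have b0: "0 \<le> b" unfolding b_def using bndXR[OF wb, of M] by (meson order_trans vnorm2_nonneg)
    have z: "vnorm2 n (\<lambda>_. 0) \<le> b" "vnorm2 m (\<lambda>_. 0) \<le> b" using b0 by (auto simp: vnorm2_def)
    have "\<bar>c t (xtil n m H AK B M (int t) \<omega>) (util n m H AK B K M (int t) \<omega>) - c t (\<lambda>_. 0) (\<lambda>_. 0)\<bar>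
        \<le> G * b * (vnorm2 n (\<lambda>i. xtil n m H AK B M (int t) \<omega> i - 0) + vnorm2 m (\<lambda>j. util n m H AK B K M (int t) \<omega> j - 0))"
      by (rule cost_lip[OF cm _ _ z]) (use bndXR[OF wb] bndUR[OF wb] in \<open>auto simp: b_def\<close>)
    also have "\<dots> \<le> G * b * (b + b)"
      using bndXR[OF wb, of M] bndUR[OF wb, of M] Gpos b0 unfolding b_def
      by (intro mult_left_mono add_mono) auto
    finally show "norm (c t (xtil n m H AK B M (int t) \<omega>) (util n m H AK B K M (int t) \<omega>))
      \<le> \<bar>c t (\<lambda>_. 0) (\<lambda>_. 0)\<bar> + G * b * (b + b)" by simp
  qed
  then show ?thesis using meas by (rule integrable_const_bound)
qed

lemma F_cvx: "\<forall>X Y \<theta>. 0 \<le> \<theta> \<and> \<theta> \<le> 1 \<longrightarrow>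
      fring P c n m H AK B K t (\<lambda>i a b. \<theta> * X i a b + (1 - \<theta>) * Y i a b)
        \<le> \<theta> * fring P c n m H AK B K t X + (1 - \<theta>) * fring P c n m H AK B K t Y"
proof (intro allI impI)
  fix X Y :: param and \<theta> :: real
  assume th: "0 \<le> \<theta> \<and> \<theta> \<le> 1"
  let ?f = "\<lambda>M \<omega>. c t (xtil n m H AK B M (int t) \<omega>) (util n m H AK B K M (int t) \<omega>)"
  have pt: "?f (\<lambda>i a b. \<theta> * X i a b + (1 - \<theta>) * Y i a b) \<omega> \<le> \<theta> * ?f X \<omega> + (1 - \<theta>) * ?f Y \<omega>" for \<omega>
    unfolding xtil_comb[of \<theta> "1-\<theta>", simplified] util_comb[of \<theta> "1-\<theta>", simplified]
    using cost_cvx[OF cm, of t] th by blast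
  have "(\<integral>\<omega>. ?f (\<lambda>i a b. \<theta> * X i a b + (1 - \<theta>) * Y i a b) \<omega> \<partial>P) \<le> (\<integral>\<omega>. \<theta> * ?f X \<omega> + (1 - \<theta>) * ?f Y \<omega> \<partial>P)"
  proof (rule integral_mono[OF integ _ pt])
    show "integrable P (\<lambda>\<omega>. \<theta> * ?f X \<omega> + (1 - \<theta>) * ?f Y \<omega>)"
      by (intro Bochner_Integration.integrable_add integrable_mult_right integ)
  qed
  also have "\<dots> = \<theta> * (\<integral>\<omega>. ?f X \<omega> \<partial>P) + (1 - \<theta>) * (\<integral>\<omega>. ?f Y \<omega> \<partial>P)"
    by (simp add: integ)
  finally show "fring P c n m H AK B K t (\<lambda>i a b. \<theta> * X i a b + (1 - \<theta>) * Y i a b)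
        \<le> \<theta> * fring P c n m H AK B K t X + (1 - \<theta>) * fring P c n m H AK B K t Y"
    unfolding fring_def .
qed

lemma F_lip:
  "\<bar>fring P c n m H AK B K t (\<lambda>i a b. M i a b + s * V i a b) - fring P c n m H AK B K t M\<bar>
    \<le> G * Rb (SV m n H M + \<bar>s\<bar> * SV m n H V) * (\<bar>s\<bar> * cD * SV m n H V)"
proof -
  interpret prob_space P by (rule ps)
  let ?f = "\<lambda>M \<omega>. c t (xtil n m H AK B M (int t) \<omega>) (util n m H AK B K M (int t) \<omega>)"
  let ?M' = "\<lambda>i a b. M i a b + s * V i a b"
  define b where "b = Rb (SV m n H M + \<bar>s\<bar> * SV m n H V)"
  define C where "C = G * b * (\<bar>s\<bar> * cD * SV m n H V)"
  have sv: "SV m n H ?M' \<le> SV m n H M + \<bar>s\<bar> * SV m n H V" by (rule SV_pert)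
  have sv0: "SV m n H M \<le> SV m n H M + \<bar>s\<bar> * SV m n H V" using SV_nonneg by simp
  have AEd: "AE \<omega> in P. \<bar>?f ?M' \<omega> - ?f M \<omega>\<bar> \<le> C"
    using AEw
  proof (rule AE_mp, intro AE_I2 impI)
    fix \<omega> assume wb0: "\<forall>s b. b < n \<longrightarrow> \<bar>noise \<omega> s b\<bar> \<le> wbar"
    have wb: "\<And>s b. b < n \<Longrightarrow> \<bar>noise \<omega> s b\<bar> \<le> wbar" using wb0 by blast
    have b1: "vnorm2 n (xtil n m H AK B ?M' (int t) \<omega>) \<le> b"
      using bndXR[OF wb0, of ?M'] Rb_mono[OF SV_nonneg sv] unfolding b_def by linarith
    have b2: "vnorm2 m (util n m H AK B K ?M' (int t) \<omega>) \<le> b"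
      using bndUR[OF wb0, of ?M'] Rb_mono[OF SV_nonneg sv] unfolding b_def by linarith
    have b3: "vnorm2 n (xtil n m H AK B M (int t) \<omega>) \<le> b"
      using bndXR[OF wb0, of M] Rb_mono[OF SV_nonneg sv0] unfolding b_def by linarith
    have b4: "vnorm2 m (util n m H AK B K M (int t) \<omega>) \<le> b"
      using bndUR[OF wb0, of M] Rb_mono[OF SV_nonneg sv0] unfolding b_def by linarith
    have b0: "0 \<le> b" using b3 by (meson order_trans vnorm2_nonneg)
    have "\<bar>?f ?M' \<omega> - ?f M \<omega>\<bar> \<le> G * b * (vnorm2 n (\<lambda>i. xtil n m H AK B ?M' (int t) \<omega> i - xtil n m H AK B M (int t) \<omega> i)
        + vnorm2 m (\<lambda>j. util n m H AK B K ?M' (int t) \<omega> j - util n m H AK B K M (int t) \<omega> j))"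
      by (rule cost_lip[OF cm b1 b2 b3 b4])
    also have "vnorm2 n (\<lambda>i. xtil n m H AK B ?M' (int t) \<omega> i - xtil n m H AK B M (int t) \<omega> i)
        = \<bar>s\<bar> * vnorm2 n (XL n m H AK B V (int t) \<omega>)"
      unfolding xtil_pert by (simp add: vnorm2_scale)
    also have "vnorm2 m (\<lambda>j. util n m H AK B K ?M' (int t) \<omega> j - util n m H AK B K M (int t) \<omega> j)
        = \<bar>s\<bar> * vnorm2 m (\<lambda>a. Ufeed n H V (int t) \<omega> a - mvmul n K (XL n m H AK B V (int t) \<omega>) a)"
      unfolding util_pert by (simp add: vnorm2_scale)
    also have "G * b * (\<bar>s\<bar> * vnorm2 n (XL n m H AK B V (int t) \<omega>)
        + \<bar>s\<bar> * vnorm2 m (\<lambda>a. Ufeed n H V (int t) \<omega> a - mvmul n K (XL n m H AK B V (int t) \<omega>) a)) \<le> C"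
    proof -
      have x: "vnorm2 n (XL n m H AK B V (int t) \<omega>) \<le> cXL * SV m n H V"
        using XL_bound[OF oA oB g0 g1 _ _ wb] kpos kB wpos unfolding cXL_def by (auto simp: ac_simps)
      have u: "vnorm2 m (\<lambda>a. Ufeed n H V (int t) \<omega> a - mvmul n K (XL n m H AK B V (int t) \<omega>) a)
          \<le> cUF * SV m n H V + \<kappa> * (cXL * SV m n H V)"
      proof -
        have "vnorm2 m (\<lambda>a. Ufeed n H V (int t) \<omega> a - mvmul n K (XL n m H AK B V (int t) \<omega>) a)
            \<le> vnorm2 m (Ufeed n H V (int t) \<omega>) + vnorm2 m (mvmul n K (XL n m H AK B V (int t) \<omega>))"
          by (rule vnorm2_diff)
        also have "\<dots> \<le> cUF * SV m n H V + \<kappa> * (cXL * SV m n H V)"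
        proof (rule add_mono)
          show "vnorm2 m (Ufeed n H V (int t) \<omega>) \<le> cUF * SV m n H V"
            unfolding cUF_def using Ufeed_bound[OF wb] wpos by simp
          have "vnorm2 m (mvmul n K (XL n m H AK B V (int t) \<omega>)) \<le> \<kappa> * vnorm2 n (XL n m H AK B V (int t) \<omega>)"
            using oK by (rule opbD)
          also have "\<dots> \<le> \<kappa> * (cXL * SV m n H V)" using x kpos by (intro mult_left_mono) auto
          finally show "vnorm2 m (mvmul n K (XL n m H AK B V (int t) \<omega>)) \<le> \<kappa> * (cXL * SV m n H V)" .
        qed
        finally show ?thesis .
      qed
      have "\<bar>s\<bar> * vnorm2 n (XL n m H AK B V (int t) \<omega>)
        + \<bar>s\<bar> * vnorm2 m (\<lambda>a. Ufeed n H V (int t) \<omega> a - mvmul n K (XL n m H AK B V (int t) \<omega>) a)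
        \<le> \<bar>s\<bar> * (cXL * SV m n H V) + \<bar>s\<bar> * (cUF * SV m n H V + \<kappa> * (cXL * SV m n H V))"
        using x u by (intro add_mono mult_left_mono) auto
      also have "\<dots> = \<bar>s\<bar> * cD * SV m n H V" unfolding cD_def by (simp add: algebra_simps)
      finally show ?thesis unfolding C_def using Gpos b0 by (intro mult_left_mono) auto
    qed
    finally show "\<bar>?f ?M' \<omega> - ?f M \<omega>\<bar> \<le> C" .
  qed
  have "\<bar>(\<integral>\<omega>. ?f ?M' \<omega> \<partial>P) - (\<integral>\<omega>. ?f M \<omega> \<partial>P)\<bar> = \<bar>\<integral>\<omega>. ?f ?M' \<omega> - ?f M \<omega> \<partial>P\<bar>"
    using integ by simp
  also have "\<dots> \<le> (\<integral>\<omega>. \<bar>?f ?M' \<omega> - ?f M \<omega>\<bar> \<partial>P)" by (rule integral_abs_bound)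
  also have "\<dots> \<le> (\<integral>\<omega>. C \<partial>P)"
  proof (rule integral_mono_AE)
    show "integrable P (\<lambda>\<omega>. \<bar>?f ?M' \<omega> - ?f M \<omega>\<bar>)"
      by (intro integrable_abs Bochner_Integration.integrable_diff integ)
    show "integrable P (\<lambda>\<omega>. C)" by simp
    show "AE \<omega> in P. \<bar>?f ?M' \<omega> - ?f M \<omega>\<bar> \<le> C" by (rule AEd)
  qed
  also have "\<dots> = C" by (simp add: prob_space)
  finally show ?thesis unfolding fring_def C_def b_def .
qed

lemma grad_F:
  assumes M: "M \<in> Mset n m H \<kappa> \<gamma>" and pg: "pgrad H m n (fring P c n m H AK B K t) M g"
  shows "frobp H m n g \<le> G * Rb (2 * sqrt (real n) * \<kappa>^3 * sqrt (real m) / \<gamma> + sqrt (real H)) * (cD * sqrt (real H))"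
proof -
  define \<sigma>0 where "\<sigma>0 = 2 * sqrt (real n) * \<kappa>^3 * sqrt (real m) / \<gamma>"
  have svM: "SV m n H M \<le> \<sigma>0" unfolding \<sigma>0_def using SV_Mset[OF M g0 g1] kpos by simp
  have s0: "0 \<le> \<sigma>0 + sqrt (real H)" unfolding \<sigma>0_def using g0 kpos by simp
  show ?thesis unfolding \<sigma>0_def[symmetric]
  proof (rule grad_bound[OF F_cvx pg])
    show "0 \<le> G * Rb (\<sigma>0 + sqrt (real H)) * (cD * sqrt (real H))"
      using Gpos consts_nonneg Rb_nonneg[of "\<sigma>0 + sqrt (real H)"] s0 by simp
    show "\<forall>s. 0 < s \<and> s * frobp H m n g \<le> 1 \<longrightarrow> fring P c n m H AK B K t (\<lambda>i a b. M i a b + s * g i a b)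
        - fring P c n m H AK B K t M \<le> s * (G * Rb (\<sigma>0 + sqrt (real H)) * (cD * sqrt (real H)) * frobp H m n g)"
    proof (intro allI impI)
      fix s assume s: "0 < s \<and> s * frobp H m n g \<le> 1"
      have sg: "SV m n H g \<le> sqrt (real H) * frobp H m n g" by (rule SV_frobp)
      have "s * SV m n H g \<le> s * (sqrt (real H) * frobp H m n g)" using s sg by (intro mult_left_mono) auto
      also have "\<dots> = sqrt (real H) * (s * frobp H m n g)" by simp
      also have "\<dots> \<le> sqrt (real H)" using s by (simp add: mult_left_le)
      finally have sg1: "s * SV m n H g \<le> sqrt (real H)" .
      have "fring P c n m H AK B K t (\<lambda>i a b. M i a b + s * g i a b) - fring P c n m H AK B K t M
          \<le> G * Rb (SV m n H M + \<bar>s\<bar> * SV m n H g) * (\<bar>s\<bar> * cD * SV m n H g)"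
        using F_lip[of M s g] by simp
      also have "\<dots> \<le> G * Rb (\<sigma>0 + sqrt (real H)) * (s * cD * (sqrt (real H) * frobp H m n g))"
      proof (rule mult_mono)
        have "Rb (SV m n H M + \<bar>s\<bar> * SV m n H g) \<le> Rb (\<sigma>0 + sqrt (real H))"
          using s svM sg1 SV_nonneg by (intro Rb_mono) (auto intro: add_nonneg_nonneg)
        then show "G * Rb (SV m n H M + \<bar>s\<bar> * SV m n H g) \<le> G * Rb (\<sigma>0 + sqrt (real H))"
          using Gpos by simp
        show "\<bar>s\<bar> * cD * SV m n H g \<le> s * cD * (sqrt (real H) * frobp H m n g)"
          using s sg consts_nonneg by (simp add: mult_left_mono)
        show "0 \<le> G * Rb (\<sigma>0 + sqrt (real H))"
          using Gpos Rb_nonneg[of "\<sigma>0 + sqrt (real H)"] s0 by simp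
        show "0 \<le> \<bar>s\<bar> * cD * SV m n H g"
          using consts_nonneg SV_nonneg by simp
      qed
      also have "\<dots> = s * (G * Rb (\<sigma>0 + sqrt (real H)) * (cD * sqrt (real H)) * frobp H m n g)"
        by (simp add: ac_simps)
      finally show "fring P c n m H AK B K t (\<lambda>i a b. M i a b + s * g i a b) - fring P c n m H AK B K t M
          \<le> s * (G * Rb (\<sigma>0 + sqrt (real H)) * (cD * sqrt (real H)) * frobp H m n g)" .
    qed
  qed
qed

end


lemma frobp_L2: "frobp H m n V = L2_set (\<lambda>p. V (fst p) (fst (snd p)) (snd (snd p))) ({1..H} \<times> {..<m} \<times> {..<n})"
  unfolding frobp_def L2_set_def by (simp add: sum.cartesian_product case_prod_beta)

lemma frob_dist_frobp: "frob_dist H m n M M' = frobp H m n (\<lambda>i a b. M i a b - M' i a b)"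
  unfolding frob_dist_def frobp_def ..

lemma frob_dist_sym: "frob_dist H m n M M' = frob_dist H m n M' M"
  unfolding frob_dist_def by (simp add: power2_commute)

lemma frob_dist_tri: "frob_dist H m n A C \<le> frob_dist H m n A B + frob_dist H m n B C"
proof -
  let ?S = "{1..H} \<times> {..<m} \<times> {..<n}"
  let ?f = "\<lambda>p. A (fst p) (fst (snd p)) (snd (snd p)) - B (fst p) (fst (snd p)) (snd (snd p))"
  let ?g = "\<lambda>p. B (fst p) (fst (snd p)) (snd (snd p)) - C (fst p) (fst (snd p)) (snd (snd p))"
  have "frob_dist H m n A C = L2_set (\<lambda>p. ?f p + ?g p) ?S"
    unfolding frob_dist_frobp frobp_L2 by simp
  also have "\<dots> \<le> L2_set ?f ?S + L2_set ?g ?S" by (rule L2_set_triangle_ineq)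
  finally show ?thesis unfolding frob_dist_frobp frobp_L2 by simp
qed

lemma frobp_scale: "frobp H m n (\<lambda>i a b. s * V i a b) = \<bar>s\<bar> * frobp H m n V"
  unfolding frobp_def by (simp add: power_mult_distrib sum_distrib_left[symmetric] real_sqrt_mult)

lemma ogd_props:
  assumes ogd: "ogd_bz f H m n Om \<eta> T Ms" and eta: "0 < \<eta>"
    and gb: "\<And>s M g. s \<le> T \<Longrightarrow> M \<in> Om \<Longrightarrow> pgrad H m n (f s) M g \<Longrightarrow> frobp H m n g \<le> Lg"
  shows "\<forall>s\<le>Suc T. Ms s \<in> Om"
    and "\<And>s. s \<le> T \<Longrightarrow> frob_dist H m n (Ms (Suc s)) (Ms s) \<le> 2 * \<eta> * Lg"
proof -
  have step: "\<And>s. s \<le> T \<Longrightarrow> \<exists>g. pgrad H m n (f s) (Ms s) g \<and>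
        proj_onto H m n Om (\<lambda>i a b. Ms s i a b - \<eta> * g i a b) (Ms (Suc s))"
    using ogd unfolding ogd_bz_def by blast
  show mem: "\<forall>s\<le>Suc T. Ms s \<in> Om"
  proof (intro allI impI)
    fix s assume "s \<le> Suc T"
    then show "Ms s \<in> Om"
    proof (induction s)
      case 0 then show ?case using ogd unfolding ogd_bz_def by blast
    next
      case (Suc s)
      then have "s \<le> T" by simp
      from step[OF this] show ?case unfolding proj_onto_def by blast
    qed
  qed
  fix s assume s: "s \<le> T"
  obtain g where pg: "pgrad H m n (f s) (Ms s) g"
    and pr: "proj_onto H m n Om (\<lambda>i a b. Ms s i a b - \<eta> * g i a b) (Ms (Suc s))"
    using step[OF s] by blast
  have ms: "Ms s \<in> Om" using mem s by simp
  have g: "frobp H m n g \<le> Lg" using gb[OF s ms pg] .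
  let ?y = "\<lambda>i a b. Ms s i a b - \<eta> * g i a b"
  have "frob_dist H m n (Ms (Suc s)) ?y \<le> frob_dist H m n (Ms s) ?y"
    using pr ms unfolding proj_onto_def by blast
  moreover have dy: "frob_dist H m n (Ms s) ?y = \<eta> * frobp H m n g"
    unfolding frob_dist_frobp using frobp_scale[of H m n \<eta> g] eta by simp
  ultimately have "frob_dist H m n (Ms (Suc s)) (Ms s) \<le> \<eta> * frobp H m n g + \<eta> * frobp H m n g"
    using frob_dist_tri[of H m n "Ms (Suc s)" "Ms s" ?y] frob_dist_sym[of H m n "Ms s" ?y] by linarith
  also have "\<dots> \<le> 2 * \<eta> * Lg" using g eta by simp
  finally show "frob_dist H m n (Ms (Suc s)) (Ms s) \<le> 2 * \<eta> * Lg" .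
qed

lemma frob_dist_self: "frob_dist H m n M M = 0"
  unfolding frob_dist_def by simp

lemma ogd_dist:
  assumes st: "\<And>s. s < T' \<Longrightarrow> frob_dist H m n (Ms (Suc s)) (Ms s) \<le> \<delta>"
  shows "s \<le> t \<Longrightarrow> t \<le> T' \<Longrightarrow> frob_dist H m n (Ms t) (Ms s) \<le> \<delta> * real (t - s)"
proof (induction t)
  case 0 then show ?case by (simp add: frob_dist_self)
next
  case (Suc t)
  show ?case
  proof (cases "s = Suc t")
    case True then show ?thesis by (simp add: frob_dist_self)
  next
    case False
    then have st': "s \<le> t" using Suc.prems by simp
    have "frob_dist H m n (Ms (Suc t)) (Ms s) \<le> frob_dist H m n (Ms (Suc t)) (Ms t) + frob_dist H m n (Ms t) (Ms s)"
      by (rule frob_dist_tri)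
    also have "\<dots> \<le> \<delta> + \<delta> * real (t - s)"
      using st[of t] Suc.IH[OF st'] Suc.prems by (intro add_mono) auto
    also have "\<dots> = \<delta> * real (Suc t - s)" using st' by (simp add: Suc_diff_le algebra_simps)
    finally show ?thesis .
  qed
qed

definition ev :: "nat \<Rightarrow> vecr" where "ev b = (\<lambda>j. if j = b then 1 else 0)"

lemma mvmul_ev: "b < c \<Longrightarrow> mvmul c Y (ev b) a = Y a b"
proof -
  assume b: "b < c"
  have "mvmul c Y (ev b) a = (\<Sum>j<c. if j = b then Y a j else 0)"
    unfolding mvmul_def ev_def by (intro sum.cong) auto
  then show ?thesis using b by (simp add: sum.delta')
qed

lemma col_sum: "(\<Sum>b<n. vnorm2 m (mvmul n Y (ev b))) \<le> sqrt (real n) * frobm m n Y"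
proof -
  have eq: "\<And>b. b \<in> {..<n} \<Longrightarrow> vnorm2 m (mvmul n Y (ev b)) = vnorm2 m (\<lambda>a. Y a b)"
    by (intro vnorm2_cong) (simp add: mvmul_ev)
  have "(\<Sum>b<n. vnorm2 m (mvmul n Y (ev b))) = (\<Sum>b<n. \<bar>vnorm2 m (\<lambda>a. Y a b)\<bar>)"
    using eq by simp
  also have "\<dots> \<le> sqrt (real (card {..<n})) * L2_set (\<lambda>b. vnorm2 m (\<lambda>a. Y a b)) {..<n}"
    by (rule sum_le_sqrt_card)
  also have "L2_set (\<lambda>b. vnorm2 m (\<lambda>a. Y a b)) {..<n} = frobm m n Y"
    unfolding L2_set_def frobm_def vnorm2_def by (simp add: sum_nonneg sum.swap[of _ "{..<n}"])
  finally show ?thesis by simp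
qed

lemma block_le: "j \<in> {1..H} \<Longrightarrow> frobm m n (V j) \<le> frobp H m n V"
  unfolding frobm_def frobp_def
  by (intro real_sqrt_le_mono member_le_sum) (auto intro!: sum_nonneg)

lemma PhiLh_lin_diff: "PhiLh n m H AK B (\<lambda>_. M) t' k r b - PhiLh n m H AK B h t k r b
    = PhiLh n m H AK B (\<lambda>s i a b. M i a b - h s i a b) t k r b"
proof -
  have "PhiLh n m H AK B (\<lambda>s i a b. 1 * (\<lambda>_. M) s i a b + (-1) * h s i a b) t k r b
      = 1 * PhiLh n m H AK B (\<lambda>_. M) t k r b + (-1) * PhiLh n m H AK B h t k r b"
    by (rule PhiLh_lin)
  moreover have "PhiLh n m H AK B (\<lambda>_. M) t' k = PhiLh n m H AK B (\<lambda>_. M) t k"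
    unfolding PhiLh_def ..
  ultimately show ?thesis by simp
qed

lemma PhiLh_diff_sum:
  assumes oA: "\<And>j. opb n n (mpow n AK j) (\<kappa>^2 * (1-\<gamma>)^j)" and oB: "opb n m B \<kappa>B"
    and pos: "0 \<le> \<kappa>B" "0 \<le> \<kappa>" "0 < \<gamma>" "\<gamma> < 1" "0 \<le> \<delta>"
    and hd: "\<And>i. i \<in> {1..H} \<Longrightarrow> frobp H m n (\<lambda>i' a b. M i' a b - h (\<tau> - int i) i' a b) \<le> \<delta> * real i"
  shows "(\<Sum>k\<in>{1..2*H}. \<Sum>b<n. vnorm2 n (mvmul n (PhiLh n m H AK B (\<lambda>s i a b. M i a b - h s i a b) \<tau> k) (ev b)))
    \<le> real (2*H) * (\<kappa>^2 * \<kappa>B * sqrt (real n) * \<delta> / \<gamma>^2)"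
proof -
  define Q where "Q = \<kappa>^2 * \<kappa>B * sqrt (real n) * \<delta>"
  have Q0: "0 \<le> Q" unfolding Q_def using pos by simp
  let ?D = "\<lambda>s i a b. M i a b - h s i a b"
  have "(\<Sum>k\<in>{1..2*H}. \<Sum>b<n. vnorm2 n (mvmul n (PhiLh n m H AK B ?D \<tau> k) (ev b)))
      \<le> (\<Sum>k\<in>{1..2*H}. \<Sum>i\<in>{1..H}. Q * (real i * (1-\<gamma>)^(i-1)))"
  proof (rule sum_mono)
    fix k
    have "(\<Sum>b<n. vnorm2 n (mvmul n (PhiLh n m H AK B ?D \<tau> k) (ev b)))
        \<le> (\<Sum>b<n. \<Sum>i\<in>{1..H}. if i < k \<and> k - i \<le> H
          then \<kappa>^2 * (1-\<gamma>)^(i-1) * \<kappa>B * vnorm2 m (mvmul n (?D (\<tau> - int i) (k - i)) (ev b)) else 0)"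
      by (intro sum_mono PhiLh_bound[OF oA oB pos(1,2)]) (use pos in simp)
    also have "\<dots> = (\<Sum>i\<in>{1..H}. if i < k \<and> k - i \<le> H
          then \<kappa>^2 * (1-\<gamma>)^(i-1) * \<kappa>B * (\<Sum>b<n. vnorm2 m (mvmul n (?D (\<tau> - int i) (k - i)) (ev b))) else 0)"
      by (subst sum.swap) (intro sum.cong refl, auto simp: sum_distrib_left)
    also have "\<dots> \<le> (\<Sum>i\<in>{1..H}. Q * (real i * (1-\<gamma>)^(i-1)))"
    proof (rule sum_mono)
      fix i assume i: "i \<in> {1..H}"
      show "(if i < k \<and> k - i \<le> H
          then \<kappa>^2 * (1-\<gamma>)^(i-1) * \<kappa>B * (\<Sum>b<n. vnorm2 m (mvmul n (?D (\<tau> - int i) (k - i)) (ev b))) else 0)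
          \<le> Q * (real i * (1-\<gamma>)^(i-1))"
      proof (cases "i < k \<and> k - i \<le> H")
        case True
        have "(\<Sum>b<n. vnorm2 m (mvmul n (?D (\<tau> - int i) (k - i)) (ev b))) \<le> sqrt (real n) * frobm m n (?D (\<tau> - int i) (k - i))"
          by (rule col_sum)
        also have "\<dots> \<le> sqrt (real n) * frobp H m n (?D (\<tau> - int i))"
          using True by (intro mult_left_mono block_le) auto
        also have "\<dots> \<le> sqrt (real n) * (\<delta> * real i)" using hd[OF i] by (intro mult_left_mono) auto
        finally have "\<kappa>^2 * (1-\<gamma>)^(i-1) * \<kappa>B * (\<Sum>b<n. vnorm2 m (mvmul n (?D (\<tau> - int i) (k - i)) (ev b)))
            \<le> \<kappa>^2 * (1-\<gamma>)^(i-1) * \<kappa>B * (sqrt (real n) * (\<delta> * real i))"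
          using pos by (intro mult_left_mono) auto
        then show ?thesis using True unfolding Q_def by (simp add: ac_simps)
      next
        case False
        have "0 \<le> Q * (real i * (1-\<gamma>)^(i-1))" using Q0 pos by simp
        then show ?thesis by (subst if_not_P[OF False])
      qed
    qed
    finally show "(\<Sum>b<n. vnorm2 n (mvmul n (PhiLh n m H AK B ?D \<tau> k) (ev b)))
        \<le> (\<Sum>i\<in>{1..H}. Q * (real i * (1-\<gamma>)^(i-1)))" .
  qed
  also have "\<dots> = real (2*H) * (Q * (\<Sum>i\<in>{1..H}. real i * (1-\<gamma>)^(i-1)))"
    by (simp add: sum_distrib_left)
  also have "\<dots> \<le> real (2*H) * (Q * (1 / (1 - (1-\<gamma>))^2))"
    using geo_sum_i[of "1-\<gamma>" H] pos Q0 by (intro mult_left_mono) auto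
  finally show ?thesis unfolding Q_def by (simp add: field_simps)
qed

lemma D_row: "\<bar>\<Sum>l<n. D i l * v l\<bar> \<le> (\<Sum>l<n. \<bar>D i l\<bar>) * vnorm2 n v"
proof -
  have "\<bar>\<Sum>l<n. D i l * v l\<bar> \<le> (\<Sum>l<n. \<bar>D i l\<bar> * \<bar>v l\<bar>)"
    by (metis (no_types, lifting) abs_mult sum.cong sum_abs)
  also have "\<dots> \<le> (\<Sum>l<n. \<bar>D i l\<bar> * vnorm2 n v)"
    by (intro sum_mono mult_left_mono abs_le_vnorm2) auto
  finally show ?thesis by (simp add: sum_distrib_right)
qed

lemma row_le_inf: "i < k \<Longrightarrow> (\<Sum>l<n. \<bar>D i l\<bar>) \<le> inf_norm k n D"
  unfolding inf_norm_def by (intro Max_ge) auto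

lemma inf_norm_nonneg: "0 \<le> inf_norm k n D"
  unfolding inf_norm_def by (intro Max_ge_iff[THEN iffD2]) auto


lemma ge1_mult: "1 \<le> (a::real) \<Longrightarrow> 1 \<le> b \<Longrightarrow> 1 \<le> a * b"
  using mult_mono[of 1 a 1 b] by simp

lemma Lg_arith:
  fixes N Mq h \<kappa> \<kappa>B \<gamma> w G :: real
  assumes N: "1 \<le> N" and Mq: "1 \<le> Mq" and h: "1 \<le> h" and k: "1 \<le> \<kappa>" and kB: "1 \<le> \<kappa>B"
    and g: "0 < \<gamma>" "\<gamma> < 1" and w: "0 < w" and G: "0 < G"
  shows "G * ((1 + \<kappa>) * (\<kappa>^2 * (N * w) / \<gamma> + \<kappa>^2 * \<kappa>B * (N * w) / \<gamma> * (2 * N * \<kappa>^3 * Mq / \<gamma> + h))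
           + N * w * (2 * N * \<kappa>^3 * Mq / \<gamma> + h))
         * ((\<kappa>^2 * \<kappa>B * (N * w) / \<gamma> + N * w + \<kappa> * (\<kappa>^2 * \<kappa>B * (N * w) / \<gamma>)) * h)
       \<le> 36 * G * \<kappa>^9 * \<kappa>B^2 * N^3 * Mq * w^2 * (1/\<gamma>)^3 * h^2"
proof -
  define q where "q = 1/\<gamma>"
  have q1: "1 \<le> q" unfolding q_def using g by simp
  have dq: "\<And>x. x / \<gamma> = x * q" unfolding q_def by simp
  define X where "X = \<kappa>^2 * \<kappa>B * N * w * q"
  have X0: "0 \<le> X" unfolding X_def using k kB N w q1 by simp
  have k2: "1 \<le> \<kappa>^2" using k by simp
  have k3: "1 \<le> \<kappa>^3" using k by simp
  have s1: "\<kappa>^2 * (N * w) * q \<le> X"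
  proof -
    have "\<kappa>^2 * (N * w) * q * 1 \<le> \<kappa>^2 * (N * w) * q * \<kappa>B"
      using kB k N w q1 by (intro mult_left_mono) auto
    then show ?thesis unfolding X_def by (simp add: ac_simps)
  qed
  have s2: "N * w \<le> X"
  proof -
    have "1 \<le> \<kappa>^2 * \<kappa>B * q" using k2 kB q1 by (intro ge1_mult)
    then have "N * w * 1 \<le> N * w * (\<kappa>^2 * \<kappa>B * q)" using N w by (intro mult_left_mono) auto
    then show ?thesis unfolding X_def by (simp add: ac_simps)
  qed
  have cXL: "\<kappa>^2 * \<kappa>B * (N * w) * q = X" unfolding X_def by (simp add: ac_simps)
  have s3: "\<kappa>^2 * \<kappa>B * (N * w) * q + N * w + \<kappa> * (\<kappa>^2 * \<kappa>B * (N * w) * q) \<le> 3 * \<kappa> * X"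
  proof -
    have "\<kappa> * X \<ge> X" using k X0 by (simp add: mult_le_cancel_right1)
    moreover have "3 * \<kappa> * X = 3 * (\<kappa> * X)" by simp
    ultimately show ?thesis using s2 unfolding cXL by linarith
  qed
  define \<sigma> where "\<sigma> = 2 * N * \<kappa>^3 * Mq * q + h"
  have Y1: "1 \<le> \<kappa>^3 * N * Mq * q" using k3 N Mq q1 by (intro ge1_mult)
  have s4: "1 + \<sigma> \<le> 4 * (\<kappa>^3 * N * Mq * q) * h"
  proof -
    define Y where "Y = \<kappa>^3 * N * Mq * q"
    have Y0: "0 \<le> Y" using Y1 unfolding Y_def by simp
    have a0: "Y * 1 \<le> Y * h" using h Y0 by (intro mult_left_mono)
    have a: "2 * N * \<kappa>^3 * Mq * q \<le> 2 * (\<kappa>^3 * N * Mq * q) * h"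
      using a0 unfolding Y_def by (simp add: ac_simps)
    have b: "h \<le> (\<kappa>^3 * N * Mq * q) * h" using Y1 h by (simp add: mult_le_cancel_right1)
    have c: "1 \<le> (\<kappa>^3 * N * Mq * q) * h" by (rule ge1_mult[OF Y1 h])
    show ?thesis unfolding \<sigma>_def using a b c by linarith
  qed
  have \<sigma>0: "0 \<le> \<sigma>" unfolding \<sigma>_def using N k Mq q1 h by simp
  have s5: "(1 + \<kappa>) * (\<kappa>^2 * (N * w) * q + X * \<sigma>) + N * w * \<sigma> \<le> 3 * \<kappa> * X * (1 + \<sigma>)"
  proof -
    have "(1 + \<kappa>) * (\<kappa>^2 * (N * w) * q + X * \<sigma>) \<le> (1 + \<kappa>) * (X + X * \<sigma>)"
      using s1 k by (intro mult_left_mono) auto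
    moreover have "N * w * \<sigma> \<le> X * \<sigma>" using s2 \<sigma>0 by (intro mult_right_mono)
    moreover have "(1 + \<kappa>) * (X + X * \<sigma>) + X * \<sigma> \<le> 3 * \<kappa> * X * (1 + \<sigma>)"
    proof -
      have "(1 + \<kappa>) * (X + X * \<sigma>) + X * \<sigma> \<le> (2 + \<kappa>) * (X * (1 + \<sigma>))"
        using X0 \<sigma>0 by (simp add: algebra_simps)
      also have "\<dots> \<le> (3 * \<kappa>) * (X * (1 + \<sigma>))" using k X0 \<sigma>0 by (intro mult_right_mono) auto
      finally show ?thesis by (simp add: ac_simps)
    qed
    ultimately show ?thesis by linarith
  qed
  have LHS: "G * ((1 + \<kappa>) * (\<kappa>^2 * (N * w) / \<gamma> + \<kappa>^2 * \<kappa>B * (N * w) / \<gamma> * (2 * N * \<kappa>^3 * Mq / \<gamma> + h))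
           + N * w * (2 * N * \<kappa>^3 * Mq / \<gamma> + h))
         * ((\<kappa>^2 * \<kappa>B * (N * w) / \<gamma> + N * w + \<kappa> * (\<kappa>^2 * \<kappa>B * (N * w) / \<gamma>)) * h)
     = G * ((1 + \<kappa>) * (\<kappa>^2 * (N * w) * q + X * \<sigma>) + N * w * \<sigma>)
         * ((\<kappa>^2 * \<kappa>B * (N * w) * q + N * w + \<kappa> * (\<kappa>^2 * \<kappa>B * (N * w) * q)) * h)"
    unfolding dq \<sigma>_def cXL by simp
  have main: "G * ((1 + \<kappa>) * (\<kappa>^2 * (N * w) * q + X * \<sigma>) + N * w * \<sigma>)
         * ((\<kappa>^2 * \<kappa>B * (N * w) * q + N * w + \<kappa> * (\<kappa>^2 * \<kappa>B * (N * w) * q)) * h)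
      \<le> G * (3 * \<kappa> * X * (4 * (\<kappa>^3 * N * Mq * q) * h)) * ((3 * \<kappa> * X) * h)"
  proof (intro mult_mono mult_left_mono)
    show "(1 + \<kappa>) * (\<kappa>^2 * (N * w) * q + X * \<sigma>) + N * w * \<sigma> \<le> 3 * \<kappa> * X * (4 * (\<kappa>^3 * N * Mq * q) * h)"
    proof -
      have "0 \<le> 3 * \<kappa> * X" using k X0 by simp
      from mult_left_mono[OF s4 this] s5 show ?thesis by (simp add: ac_simps)
    qed
  qed (use s3 G k X0 h q1 N Mq \<sigma>0 w kB in \<open>auto intro!: mult_nonneg_nonneg add_nonneg_nonneg\<close>)
  also have "\<dots> = 36 * G * \<kappa>^9 * \<kappa>B^2 * N^3 * Mq * w^2 * q^3 * h^2"
    unfolding X_def by algebra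
  finally have main: "G * ((1 + \<kappa>) * (\<kappa>^2 * (N * w) * q + X * \<sigma>) + N * w * \<sigma>)
         * ((\<kappa>^2 * \<kappa>B * (N * w) * q + N * w + \<kappa> * (\<kappa>^2 * \<kappa>B * (N * w) * q)) * h)
      \<le> 36 * G * \<kappa>^9 * \<kappa>B^2 * N^3 * Mq * w^2 * q^3 * h^2" .
  show ?thesis unfolding LHS q_def[symmetric] by (rule main)
qed

context ctx
begin

lemma grad_F_explicit:
  assumes n1: "1 \<le> n" and m1: "1 \<le> m" and H1: "1 \<le> H"
    and M: "M \<in> Mset n m H \<kappa> \<gamma>" and pg: "pgrad H m n (fring P c n m H AK B K t) M g"
  shows "frobp H m n g \<le> 36 * G * \<kappa>^9 * \<kappa>B^2 * sqrt (real n)^3 * sqrt (real m) * wbar^2 * (1/\<gamma>)^3 * sqrt (real H)^2"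
proof -
  have "frobp H m n g \<le> G * Rb (2 * sqrt (real n) * \<kappa>^3 * sqrt (real m) / \<gamma> + sqrt (real H)) * (cD * sqrt (real H))"
    by (rule grad_F[OF M pg])
  also have "\<dots> \<le> 36 * G * \<kappa>^9 * \<kappa>B^2 * sqrt (real n)^3 * sqrt (real m) * wbar^2 * (1/\<gamma>)^3 * sqrt (real H)^2"
    unfolding Rb_def RX_def cX0_def cXL_def cUF_def cD_def
    by (rule Lg_arith) (use n1 m1 H1 kpos kB g0 g1 wpos Gpos in auto)
  finally show ?thesis .
qed

end

lemma abs_diff_le:
  fixes w :: real
  assumes "0 \<le> w"
  shows "\<bar>w * (\<Sum>k\<in>A. \<Sum>b<n. \<bar>f k b\<bar>) - w * (\<Sum>k\<in>A. \<Sum>b<n. \<bar>g k b\<bar>)\<bar> \<le> w * (\<Sum>k\<in>A. \<Sum>b<n. \<bar>f k b - g k b\<bar>)"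
proof -
  have "\<bar>w * (\<Sum>k\<in>A. \<Sum>b<n. \<bar>f k b\<bar>) - w * (\<Sum>k\<in>A. \<Sum>b<n. \<bar>g k b\<bar>)\<bar>
      = w * \<bar>\<Sum>k\<in>A. \<Sum>b<n. (\<bar>f k b\<bar> - \<bar>g k b\<bar>)\<bar>"
    using assms by (simp add: right_diff_distrib[symmetric] sum_subtractf abs_mult)
  also have "\<dots> \<le> w * (\<Sum>k\<in>A. \<Sum>b<n. \<bar>f k b - g k b\<bar>)"
  proof (rule mult_left_mono[OF _ assms])
    have "\<bar>\<Sum>k\<in>A. \<Sum>b<n. (\<bar>f k b\<bar> - \<bar>g k b\<bar>)\<bar> \<le> (\<Sum>k\<in>A. \<bar>\<Sum>b<n. (\<bar>f k b\<bar> - \<bar>g k b\<bar>)\<bar>)"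
      by (rule sum_abs)
    also have "\<dots> \<le> (\<Sum>k\<in>A. \<Sum>b<n. \<bar>\<bar>f k b\<bar> - \<bar>g k b\<bar>\<bar>)"
      by (intro sum_mono sum_abs)
    also have "\<dots> \<le> (\<Sum>k\<in>A. \<Sum>b<n. \<bar>f k b - g k b\<bar>)"
      by (intro sum_mono abs_triangle_ineq3)
    finally show "\<bar>\<Sum>k\<in>A. \<Sum>b<n. (\<bar>f k b\<bar> - \<bar>g k b\<bar>)\<bar> \<le> (\<Sum>k\<in>A. \<Sum>b<n. \<bar>f k b - g k b\<bar>)" .
  qed
  finally show ?thesis .
qed

lemma gx_diff:
  assumes oA: "\<And>j. opb n n (mpow n AK j) (\<kappa>^2 * (1-\<gamma>)^j)" and oB: "opb n m B \<kappa>B"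
    and pos: "0 \<le> \<kappa>B" "0 \<le> \<kappa>" "0 < \<gamma>" "\<gamma> < 1" "0 \<le> \<delta>" "0 \<le> wbar"
    and i: "i < kx"
    and hd: "\<And>i'. i' \<in> {1..H} \<Longrightarrow> frobp H m n (\<lambda>i a b. M i a b - hist (int t + 1 - int i') i a b) \<le> \<delta> * real i'"
  shows "\<bar>gx n m H AK B wbar Dx (\<lambda>_. M) 0 i - gx n m H AK B wbar Dx hist (int t) i\<bar>
    \<le> wbar * inf_norm kx n Dx * (real (2*H) * (\<kappa>^2 * \<kappa>B * sqrt (real n) * \<delta> / \<gamma>^2))"
proof -
  let ?\<tau> = "int t + 1"
  let ?D = "\<lambda>s i a b. M i a b - hist s i a b"
  let ?f = "\<lambda>k b. \<Sum>l<n. Dx i l * Phix n m H AK B (\<lambda>_. M) (0 + 1) k l b"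
  let ?g = "\<lambda>k b. \<Sum>l<n. Dx i l * Phix n m H AK B hist (int t + 1) k l b"
  have "\<bar>gx n m H AK B wbar Dx (\<lambda>_. M) 0 i - gx n m H AK B wbar Dx hist (int t) i\<bar>
      \<le> wbar * (\<Sum>k\<in>{1..2*H}. \<Sum>b<n. \<bar>?f k b - ?g k b\<bar>)"
    unfolding gx_def by (rule abs_diff_le[OF pos(6)])
  also have "\<dots> \<le> wbar * (\<Sum>k\<in>{1..2*H}. \<Sum>b<n. inf_norm kx n Dx * vnorm2 n (mvmul n (PhiLh n m H AK B ?D ?\<tau> k) (ev b)))"
  proof (intro mult_left_mono[OF _ pos(6)] sum_mono)
    fix k b assume b: "b \<in> {..<n}"
    have eq: "?f k b - ?g k b = (\<Sum>l<n. Dx i l * mvmul n (PhiLh n m H AK B ?D ?\<tau> k) (ev b) l)"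
    proof -
      have "?f k b - ?g k b = (\<Sum>l<n. Dx i l * (Phix n m H AK B (\<lambda>_. M) (0 + 1) k l b - Phix n m H AK B hist (int t + 1) k l b))"
        by (simp only: right_diff_distrib sum_subtractf)
      also have "\<dots> = (\<Sum>l<n. Dx i l * mvmul n (PhiLh n m H AK B ?D ?\<tau> k) (ev b) l)"
      proof (rule sum.cong[OF refl])
        fix l
        have "Phix n m H AK B (\<lambda>_. M) (0 + 1) k l b - Phix n m H AK B hist (int t + 1) k l b
            = PhiLh n m H AK B (\<lambda>_. M) (0 + 1) k l b - PhiLh n m H AK B hist (int t + 1) k l b"
          unfolding Phix_split by simp
        also have "\<dots> = PhiLh n m H AK B ?D ?\<tau> k l b" by (rule PhiLh_lin_diff)
        also have "\<dots> = mvmul n (PhiLh n m H AK B ?D ?\<tau> k) (ev b) l" using b by (simp add: mvmul_ev)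
        finally show "Dx i l * (Phix n m H AK B (\<lambda>_. M) (0 + 1) k l b - Phix n m H AK B hist (int t + 1) k l b)
            = Dx i l * mvmul n (PhiLh n m H AK B ?D ?\<tau> k) (ev b) l" by simp
      qed
      finally show ?thesis .
    qed
    have "\<bar>\<Sum>l<n. Dx i l * mvmul n (PhiLh n m H AK B ?D ?\<tau> k) (ev b) l\<bar> \<le> (\<Sum>l<n. \<bar>Dx i l\<bar>) * vnorm2 n (mvmul n (PhiLh n m H AK B ?D ?\<tau> k) (ev b))"
      by (rule D_row)
    also have "\<dots> \<le> inf_norm kx n Dx * vnorm2 n (mvmul n (PhiLh n m H AK B ?D ?\<tau> k) (ev b))"
      using row_le_inf[OF i] vnorm2_nonneg by (rule mult_right_mono)
    finally show "\<bar>?f k b - ?g k b\<bar> \<le> inf_norm kx n Dx * vnorm2 n (mvmul n (PhiLh n m H AK B ?D ?\<tau> k) (ev b))" unfolding eq .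
  qed
  also have "\<dots> = wbar * inf_norm kx n Dx * (\<Sum>k\<in>{1..2*H}. \<Sum>b<n. vnorm2 n (mvmul n (PhiLh n m H AK B ?D ?\<tau> k) (ev b)))"
    by (simp add: sum_distrib_left ac_simps)
  also have "\<dots> \<le> wbar * inf_norm kx n Dx * (real (2*H) * (\<kappa>^2 * \<kappa>B * sqrt (real n) * \<delta> / \<gamma>^2))"
  proof (rule mult_left_mono)
    show "(\<Sum>k\<in>{1..2*H}. \<Sum>b<n. vnorm2 n (mvmul n (PhiLh n m H AK B ?D ?\<tau> k) (ev b)))
        \<le> real (2*H) * (\<kappa>^2 * \<kappa>B * sqrt (real n) * \<delta> / \<gamma>^2)"
      by (rule PhiLh_diff_sum[OF oA oB pos(1-5)]) (rule hd)
    show "0 \<le> wbar * inf_norm kx n Dx" using pos(6) inf_norm_nonneg by simp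
  qed
  finally show ?thesis .
qed

lemma gu_diff:
  assumes oA: "\<And>j. opb n n (mpow n AK j) (\<kappa>^2 * (1-\<gamma>)^j)" and oB: "opb n m B \<kappa>B" and oK: "opb m n K \<kappa>"
    and pos: "0 \<le> \<kappa>B" "0 \<le> \<kappa>" "0 < \<gamma>" "\<gamma> < 1" "0 \<le> \<delta>" "0 \<le> wbar"
    and j: "j < ku" and hM: "hist (int t) = M"
    and hd: "\<And>i'. i' \<in> {1..H} \<Longrightarrow> frobp H m n (\<lambda>i a b. M i a b - hist (int t - int i') i a b) \<le> \<delta> * real i'"
  shows "\<bar>gu n m H AK B K wbar Du (\<lambda>_. M) 0 j - gu n m H AK B K wbar Du hist (int t) j\<bar>
    \<le> wbar * (inf_norm ku m Du * \<kappa>) * (real (2*H) * (\<kappa>^2 * \<kappa>B * sqrt (real n) * \<delta> / \<gamma>^2))"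
proof -
  let ?\<tau> = "int t"
  let ?D = "\<lambda>s i a b. M i a b - hist s i a b"
  let ?f = "\<lambda>k b. \<Sum>a<m. Du j a * Phiu n m H AK B K (\<lambda>_. M) 0 k a b"
  let ?g = "\<lambda>k b. \<Sum>a<m. Du j a * Phiu n m H AK B K hist (int t) k a b"
  have "\<bar>gu n m H AK B K wbar Du (\<lambda>_. M) 0 j - gu n m H AK B K wbar Du hist (int t) j\<bar>
      \<le> wbar * (\<Sum>k\<in>{1..2*H}. \<Sum>b<n. \<bar>?f k b - ?g k b\<bar>)"
    unfolding gu_def by (rule abs_diff_le[OF pos(6)])
  also have "\<dots> \<le> wbar * (\<Sum>k\<in>{1..2*H}. \<Sum>b<n. (inf_norm ku m Du * \<kappa>) * vnorm2 n (mvmul n (PhiLh n m H AK B ?D ?\<tau> k) (ev b)))"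
  proof (intro mult_left_mono[OF _ pos(6)] sum_mono)
    fix k b assume b: "b \<in> {..<n}"
    let ?v = "mvmul n (PhiLh n m H AK B ?D ?\<tau> k) (ev b)"
    have eq: "?f k b - ?g k b = (\<Sum>a<m. Du j a * (- mvmul n K ?v a))"
    proof -
      have "?f k b - ?g k b = (\<Sum>a<m. Du j a * (Phiu n m H AK B K (\<lambda>_. M) 0 k a b - Phiu n m H AK B K hist (int t) k a b))"
        by (simp only: right_diff_distrib sum_subtractf)
      also have "\<dots> = (\<Sum>a<m. Du j a * (- mvmul n K ?v a))"
      proof (rule sum.cong[OF refl])
        fix a
        have "mmul n K (Phix n m H AK B (\<lambda>_. M) 0 k) a b - mmul n K (Phix n m H AK B hist (int t) k) a b
            = mvmul n K ?v a"
        proof -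
          have "mmul n K (Phix n m H AK B (\<lambda>_. M) 0 k) a b - mmul n K (Phix n m H AK B hist (int t) k) a b
            = mvmul n K (\<lambda>l. Phix n m H AK B (\<lambda>_. M) 0 k l b - Phix n m H AK B hist (int t) k l b) a"
            unfolding mmul_def mvmul_def by (simp add: sum_subtractf[symmetric] right_diff_distrib)
          also have "(\<lambda>l. Phix n m H AK B (\<lambda>_. M) 0 k l b - Phix n m H AK B hist (int t) k l b) = ?v"
            using b by (intro ext) (simp add: Phix_split mvmul_ev PhiLh_lin_diff)
          finally show ?thesis .
        qed
        then show "Du j a * (Phiu n m H AK B K (\<lambda>_. M) 0 k a b - Phiu n m H AK B K hist (int t) k a b) = Du j a * (- mvmul n K ?v a)"
          unfolding Phiu_def hM by (simp add: algebra_simps)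
      qed
      finally show ?thesis .
    qed
    have "\<bar>\<Sum>a<m. Du j a * (- mvmul n K ?v a)\<bar> \<le> (\<Sum>a<m. \<bar>Du j a\<bar>) * vnorm2 m (\<lambda>a. - mvmul n K ?v a)"
      by (rule D_row)
    also have "\<dots> \<le> inf_norm ku m Du * (\<kappa> * vnorm2 n ?v)"
    proof (rule mult_mono)
      show "(\<Sum>a<m. \<bar>Du j a\<bar>) \<le> inf_norm ku m Du" by (rule row_le_inf[OF j])
      show "vnorm2 m (\<lambda>a. - mvmul n K ?v a) \<le> \<kappa> * vnorm2 n ?v"
        unfolding vnorm2_minus using oK by (rule opbD)
    qed (auto simp: inf_norm_nonneg)
    finally have "\<bar>\<Sum>a<m. Du j a * (- mvmul n K ?v a)\<bar> \<le> (inf_norm ku m Du * \<kappa>) * vnorm2 n ?v" by (simp only: ac_simps)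
    then show "\<bar>?f k b - ?g k b\<bar> \<le> (inf_norm ku m Du * \<kappa>) * vnorm2 n ?v" unfolding eq .
  qed
  also have "\<dots> = wbar * (inf_norm ku m Du * \<kappa>) * (\<Sum>k\<in>{1..2*H}. \<Sum>b<n. vnorm2 n (mvmul n (PhiLh n m H AK B ?D ?\<tau> k) (ev b)))"
    by (simp add: sum_distrib_left ac_simps)
  also have "\<dots> \<le> wbar * (inf_norm ku m Du * \<kappa>) * (real (2*H) * (\<kappa>^2 * \<kappa>B * sqrt (real n) * \<delta> / \<gamma>^2))"
  proof (rule mult_left_mono)
    show "(\<Sum>k\<in>{1..2*H}. \<Sum>b<n. vnorm2 n (mvmul n (PhiLh n m H AK B ?D ?\<tau> k) (ev b)))
        \<le> real (2*H) * (\<kappa>^2 * \<kappa>B * sqrt (real n) * \<delta> / \<gamma>^2)"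
      by (rule PhiLh_diff_sum[OF oA oB pos(1-5)]) (rule hd)
    show "0 \<le> wbar * (inf_norm ku m Du * \<kappa>)" using pos inf_norm_nonneg by simp
  qed
  finally show ?thesis .
qed


lemma peval_p: "peval [(144, [1,0,12,3,5,3,1]), (144, [0,1,12,3,5,3,1]), (144, [0,0,12,3,5,3,1])] [a,b,k,kb,q,w,g]
   = 144 * k^12 * kb^3 * q^5 * w^3 * g * (a + b + 1)"
  by (simp add: peval_def eval_nat_numeral lessThan_Suc algebra_simps)

lemma final_arith:
  fixes N Mq h w D \<kappa> \<kappa>B \<gamma> G \<eta> Dx Du :: real
  assumes "0 \<le> w" "0 \<le> G" "0 \<le> \<eta>" "0 < \<gamma>" "0 \<le> \<kappa>B" "0 \<le> Mq" "0 \<le> h" "0 \<le> N"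
    and D: "D * \<kappa>^11 \<le> \<kappa>^12 * (Dx + Du + 1)"
  shows "w * D * ((2 * h^2) * (\<kappa>^2 * \<kappa>B * N * (2 * \<eta> * (36 * G * \<kappa>^9 * \<kappa>B^2 * N^3 * Mq * w^2 * (1/\<gamma>)^3 * h^2)) / \<gamma>^2))
    \<le> 144 * \<kappa>^12 * \<kappa>B^3 * (1/\<gamma>)^5 * w^3 * G * (Dx + Du + 1) * \<eta> * (N^2)^2 * Mq * (h^2)^2"
proof -
  define Z where "Z = 144 * \<kappa>B^3 * (1/\<gamma>)^5 * w^3 * G * \<eta> * (N^2)^2 * Mq * (h^2)^2"
  have Z0: "0 \<le> Z" unfolding Z_def using assms by simp
  have "w * D * ((2 * h^2) * (\<kappa>^2 * \<kappa>B * N * (2 * \<eta> * (36 * G * \<kappa>^9 * \<kappa>B^2 * N^3 * Mq * w^2 * (1/\<gamma>)^3 * h^2)) / \<gamma>^2))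
      = Z * (D * \<kappa>^11)" unfolding Z_def by (simp add: field_simps) algebra
  also have "\<dots> \<le> Z * (\<kappa>^12 * (Dx + Du + 1))" using D Z0 by (rule mult_left_mono)
  also have "\<dots> = 144 * \<kappa>^12 * \<kappa>B^3 * (1/\<gamma>)^5 * w^3 * G * (Dx + Du + 1) * \<eta> * (N^2)^2 * Mq * (h^2)^2"
    unfolding Z_def by (simp add: ac_simps)
  finally show ?thesis .
qed

lemma hist_dist:
  assumes dist: "\<And>s t. s \<le> t \<Longrightarrow> t \<le> Suc T \<Longrightarrow> frob_dist H m n (Ms t) (Ms s) \<le> \<delta> * real (t - s)"
    and d0: "0 \<le> \<delta>" and t: "t \<le> T" and i: "1 \<le> i"
  shows "frobp H m n (\<lambda>i' a b. Ms t i' a b - histof Ms (int t + 1 - int i) i' a b) \<le> \<delta> * real i"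
    and "frobp H m n (\<lambda>i' a b. Ms t i' a b - histof Ms (int t - int i) i' a b) \<le> \<delta> * real i"
proof -
  define s1 where "s1 = nat (int t + 1 - int i)"
  define s2 where "s2 = nat (int t - int i)"
  have s1: "s1 \<le> t" "t - s1 \<le> i" unfolding s1_def using i by auto
  have s2: "s2 \<le> t" "t - s2 \<le> i" unfolding s2_def using i by auto
  have "frob_dist H m n (Ms t) (Ms s1) \<le> \<delta> * real (t - s1)" using dist[OF s1(1)] t by simp
  also have "\<dots> \<le> \<delta> * real i" using s1 d0 by (intro mult_left_mono) auto
  finally show "frobp H m n (\<lambda>i' a b. Ms t i' a b - histof Ms (int t + 1 - int i) i' a b) \<le> \<delta> * real i"
    unfolding frob_dist_frobp histof_def s1_def .
  have "frob_dist H m n (Ms t) (Ms s2) \<le> \<delta> * real (t - s2)" using dist[OF s2(1)] t by simp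
  also have "\<dots> \<le> \<delta> * real i" using s2 d0 by (intro mult_left_mono) auto
  finally show "frobp H m n (\<lambda>i' a b. Ms t i' a b - histof Ms (int t - int i) i' a b) \<le> \<delta> * real i"
    unfolding frob_dist_frobp histof_def s2_def .
qed

theorem lemma3:
  "\<exists>p :: (real \<times> nat list) list.
    \<forall>(n::nat) (m::nat) (kx::nat) (ku::nat) (A::matr) (B::matr) (K::matr)
      (Dx::matr) (dx::vecr) (Du::matr) (du::vecr) (\<kappa>::real) (\<gamma>::real) (wbar::real) (G::real)
      (P::(nat \<Rightarrow> vecr) measure) (c::nat \<Rightarrow> vecr \<Rightarrow> vecr \<Rightarrow> real)
      (H::nat) (\<epsilon>::real) (\<eta>::real) (T::nat) (Ms::nat \<Rightarrow> param).
      1 \<le> n \<and> 1 \<le> m \<and> 0 < \<gamma> \<and> \<gamma> < 1 \<and> 1 \<le> \<kappa> \<and>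
      strongly_stable n m A B \<kappa> \<gamma> K \<and>
      0 < wbar \<and> noise_model n wbar P \<and>
      0 < G \<and> cost_model n m G c \<and>
      real H \<ge> ln (2 * \<kappa>^2) / ln (1 / (1 - \<gamma>)) \<and>
      Omega n m kx ku H (closed_loop m A B K) B K wbar Dx dx Du du \<kappa> \<gamma> \<epsilon> \<noteq> {} \<and>
      0 < \<eta> \<and>
      ogd_bz (\<lambda>t. fring P c n m H (closed_loop m A B K) B K t) H m n
             (Omega n m kx ku H (closed_loop m A B K) B K wbar Dx dx Du du \<kappa> \<gamma> \<epsilon>) \<eta> T Ms
      \<longrightarrow>
      (let c2 = peval p [inf_norm kx n Dx, inf_norm ku m Du, \<kappa>, max (spec_norm n m B) 1,
                         1 / \<gamma>, wbar, G];
           eps2 = c2 * \<eta> * real n ^ 2 * sqrt (real m) * real H ^ 2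
       in 0 < c2 \<and>
          (\<forall>t\<le>T.
             (\<forall>i<kx. \<bar>gx n m H (closed_loop m A B K) B wbar Dx (\<lambda>_. Ms t) 0 i
                       - gx n m H (closed_loop m A B K) B wbar Dx (histof Ms) (int t) i\<bar> \<le> eps2) \<and>
             (\<forall>j<ku. \<bar>gu n m H (closed_loop m A B K) B K wbar Du (\<lambda>_. Ms t) 0 j
                       - gu n m H (closed_loop m A B K) B K wbar Du (histof Ms) (int t) j\<bar> \<le> eps2)))"
proof -
  define p :: "(real \<times> nat list) list" where
    "p = [(144, [1,0,12,3,5,3,1]), (144, [0,1,12,3,5,3,1]), (144, [0,0,12,3,5,3,1])]"
  show ?thesis
  proof (rule exI[of _ p], intro allI impI)
    fix n m kx ku :: nat and A B K Dx :: matr and dx :: vecr and Du :: matr and du :: vecr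
      and \<kappa> \<gamma> wbar G :: real and P :: "(nat \<Rightarrow> vecr) measure" and c :: "nat \<Rightarrow> vecr \<Rightarrow> vecr \<Rightarrow> real"
      and H :: nat and \<epsilon> \<eta> :: real and T :: nat and Ms :: "nat \<Rightarrow> param"
    assume hyp: "1 \<le> n \<and> 1 \<le> m \<and> 0 < \<gamma> \<and> \<gamma> < 1 \<and> 1 \<le> \<kappa> \<and>
      strongly_stable n m A B \<kappa> \<gamma> K \<and>
      0 < wbar \<and> noise_model n wbar P \<and>
      0 < G \<and> cost_model n m G c \<and>
      real H \<ge> ln (2 * \<kappa>^2) / ln (1 / (1 - \<gamma>)) \<and>
      Omega n m kx ku H (closed_loop m A B K) B K wbar Dx dx Du du \<kappa> \<gamma> \<epsilon> \<noteq> {} \<and>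
      0 < \<eta> \<and>
      ogd_bz (\<lambda>t. fring P c n m H (closed_loop m A B K) B K t) H m n
             (Omega n m kx ku H (closed_loop m A B K) B K wbar Dx dx Du du \<kappa> \<gamma> \<epsilon>) \<eta> T Ms"
    then have n1: "1 \<le> n" and m1: "1 \<le> m" and g0: "0 < \<gamma>" and g1: "\<gamma> < 1" and k1: "1 \<le> \<kappa>"
      and ss: "strongly_stable n m A B \<kappa> \<gamma> K" and w0: "0 < wbar" and nm: "noise_model n wbar P"
      and G0: "0 < G" and cm: "cost_model n m G c" and eta: "0 < \<eta>"
      and ogd: "ogd_bz (\<lambda>t. fring P c n m H (closed_loop m A B K) B K t) H m n
             (Omega n m kx ku H (closed_loop m A B K) B K wbar Dx dx Du du \<kappa> \<gamma> \<epsilon>) \<eta> T Ms"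
      by auto
    define AK where "AK = closed_loop m A B K"
    define \<kappa>B where "\<kappa>B = max (spec_norm n m B) 1"
    define Om where "Om = Omega n m kx ku H AK B K wbar Dx dx Du du \<kappa> \<gamma> \<epsilon>"
    define c2 where "c2 = peval p [inf_norm kx n Dx, inf_norm ku m Du, \<kappa>, \<kappa>B, 1 / \<gamma>, wbar, G]"
    define E where "E = c2 * \<eta> * real n ^ 2 * sqrt (real m) * real H ^ 2"
    have c2eq: "c2 = 144 * \<kappa>^12 * \<kappa>B^3 * (1/\<gamma>)^5 * wbar^3 * G * (inf_norm kx n Dx + inf_norm ku m Du + 1)"
      unfolding c2_def p_def by (rule peval_p)
    have kB1: "1 \<le> \<kappa>B" unfolding \<kappa>B_def by simp
    have nD: "0 \<le> inf_norm kx n Dx" "0 \<le> inf_norm ku m Du" by (rule inf_norm_nonneg)+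
    have c2pos: "0 < c2" unfolding c2eq using k1 kB1 g0 w0 G0 nD
      by (intro mult_pos_pos) auto
    have main: "\<forall>t\<le>T.
             (\<forall>i<kx. \<bar>gx n m H AK B wbar Dx (\<lambda>_. Ms t) 0 i
                       - gx n m H AK B wbar Dx (histof Ms) (int t) i\<bar> \<le> E) \<and>
             (\<forall>j<ku. \<bar>gu n m H AK B K wbar Du (\<lambda>_. Ms t) 0 j
                       - gu n m H AK B K wbar Du (histof Ms) (int t) j\<bar> \<le> E)"
    proof (cases "H = 0")
      case True
      then show ?thesis unfolding gx_def gu_def E_def by simp
    next
      case False
      then have H1: "1 \<le> H" by simp
      have oA: "\<And>j. opb n n (mpow n AK j) (\<kappa>^2 * (1-\<gamma>)^j)"
        unfolding AK_def using strongly_stable_pow[OF ss g1] .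
      have oB: "opb n m B \<kappa>B" unfolding \<kappa>B_def by (rule opb_mono[OF spec_norm_opb]) simp
      have oK: "opb m n K \<kappa>" by (rule strongly_stable_K[OF ss])
      have ctxI: "ctx n m AK B K \<kappa> \<gamma> \<kappa>B wbar G c P"
        unfolding ctx_def using oA oB oK k1 kB1 g0 g1 w0 G0 cm nm by auto
      define Lg where "Lg = 36 * G * \<kappa>^9 * \<kappa>B^2 * sqrt (real n)^3 * sqrt (real m) * wbar^2 * (1/\<gamma>)^3 * sqrt (real H)^2"
      have Lg0: "0 \<le> Lg" unfolding Lg_def using G0 k1 kB1 w0 g0 by simp
      have OmM: "Om \<subseteq> Mset n m H \<kappa> \<gamma>" unfolding Om_def Omega_def by auto
      have gb: "\<And>s M g. s \<le> T \<Longrightarrow> M \<in> Om \<Longrightarrow> pgrad H m n ((\<lambda>t. fring P c n m H AK B K t) s) M g \<Longrightarrow> frobp H m n g \<le> Lg"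
      proof -
        fix s M g assume "s \<le> T" "M \<in> Om" "pgrad H m n ((\<lambda>t. fring P c n m H AK B K t) s) M g"
        then show "frobp H m n g \<le> Lg" unfolding Lg_def
          using ctx.grad_F_explicit[OF ctxI n1 m1 H1] OmM by auto
      qed
      have ogd': "ogd_bz (\<lambda>t. fring P c n m H AK B K t) H m n Om \<eta> T Ms"
        using ogd unfolding AK_def Om_def .
      have steps: "\<And>s. s \<le> T \<Longrightarrow> frob_dist H m n (Ms (Suc s)) (Ms s) \<le> 2 * \<eta> * Lg"
        by (rule ogd_props(2)[where f="fring P c n m H AK B K" and Lg=Lg, OF ogd' eta gb])
      have dist: "\<And>s t. s \<le> t \<Longrightarrow> t \<le> Suc T \<Longrightarrow> frob_dist H m n (Ms t) (Ms s) \<le> (2 * \<eta> * Lg) * real (t - s)"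
        by (rule ogd_dist) (use steps in auto)
      have d0: "0 \<le> 2 * \<eta> * Lg" using eta Lg0 by simp
      have pos: "0 \<le> \<kappa>B" "0 \<le> \<kappa>" "0 < \<gamma>" "\<gamma> < 1" "0 \<le> 2 * \<eta> * Lg" "0 \<le> wbar"
        using kB1 k1 g0 g1 d0 w0 by auto
      have sqn: "sqrt (real n) ^ 2 = real n" by simp
      have sqH: "sqrt (real H) ^ 2 = real H" by simp
      have Eeq: "E = 144 * \<kappa>^12 * \<kappa>B^3 * (1/\<gamma>)^5 * wbar^3 * G * (inf_norm kx n Dx + inf_norm ku m Du + 1) * \<eta>
          * (sqrt (real n) ^ 2)^2 * sqrt (real m) * (sqrt (real H) ^ 2)^2"
        unfolding E_def c2eq sqn sqH by (simp add: ac_simps)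
      have fin: "wbar * D * (real (2*H) * (\<kappa>^2 * \<kappa>B * sqrt (real n) * (2 * \<eta> * Lg) / \<gamma>^2)) \<le> E"
        if D: "D * \<kappa>^11 \<le> \<kappa>^12 * (inf_norm kx n Dx + inf_norm ku m Du + 1)" for D
      proof -
        have r: "real (2*H) = 2 * sqrt (real H) ^ 2" using sqH by simp
        have FA: "wbar * D * ((2 * sqrt (real H)^2) * (\<kappa>^2 * \<kappa>B * sqrt (real n) * (2 * \<eta> * (36 * G * \<kappa>^9 * \<kappa>B^2 * sqrt (real n)^3 * sqrt (real m) * wbar^2 * (1/\<gamma>)^3 * sqrt (real H)^2)) / \<gamma>^2))
          \<le> 144 * \<kappa>^12 * \<kappa>B^3 * (1/\<gamma>)^5 * wbar^3 * G * (inf_norm kx n Dx + inf_norm ku m Du + 1) * \<eta> * (sqrt (real n)^2)^2 * sqrt (real m) * (sqrt (real H)^2)^2"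
          by (rule final_arith[OF _ _ _ g0 _ _ _ _ D]) (use w0 G0 eta kB1 in auto)
        show ?thesis unfolding Eeq Lg_def r by (rule FA)
      qed
      show ?thesis
      proof (intro allI impI conjI)
        fix t i assume t: "t \<le> T" and i: "i < kx"
        have "\<bar>gx n m H AK B wbar Dx (\<lambda>_. Ms t) 0 i - gx n m H AK B wbar Dx (histof Ms) (int t) i\<bar>
            \<le> wbar * inf_norm kx n Dx * (real (2*H) * (\<kappa>^2 * \<kappa>B * sqrt (real n) * (2 * \<eta> * Lg) / \<gamma>^2))"
          by (rule gx_diff[OF oA oB pos i]) (rule hist_dist(1)[OF dist d0 t], auto)
        also have "\<dots> \<le> E"
        proof (rule fin)
          have "inf_norm kx n Dx * \<kappa>^11 \<le> inf_norm kx n Dx * \<kappa>^12"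
            using nD k1 by (intro mult_left_mono power_increasing) auto
          also have "\<dots> \<le> \<kappa>^12 * (inf_norm kx n Dx + inf_norm ku m Du + 1)"
            using nD k1 by (simp add: algebra_simps)
          finally show "inf_norm kx n Dx * \<kappa>^11 \<le> \<kappa>^12 * (inf_norm kx n Dx + inf_norm ku m Du + 1)" .
        qed
        finally show "\<bar>gx n m H AK B wbar Dx (\<lambda>_. Ms t) 0 i - gx n m H AK B wbar Dx (histof Ms) (int t) i\<bar> \<le> E" .
      next
        fix t j assume t: "t \<le> T" and j: "j < ku"
        have hM: "histof Ms (int t) = Ms t" unfolding histof_def by simp
        have "\<bar>gu n m H AK B K wbar Du (\<lambda>_. Ms t) 0 j - gu n m H AK B K wbar Du (histof Ms) (int t) j\<bar>
            \<le> wbar * (inf_norm ku m Du * \<kappa>) * (real (2*H) * (\<kappa>^2 * \<kappa>B * sqrt (real n) * (2 * \<eta> * Lg) / \<gamma>^2))"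
          by (rule gu_diff[where hist="histof Ms" and t=t and M="Ms t", OF oA oB oK pos j hM]) (rule hist_dist(2)[OF dist d0 t], auto)
        also have "\<dots> \<le> E"
        proof (rule fin)
          have "inf_norm ku m Du * \<kappa> * \<kappa>^11 = inf_norm ku m Du * \<kappa>^12" by (simp add: power_Suc[symmetric] ac_simps)
          also have "\<dots> \<le> \<kappa>^12 * (inf_norm kx n Dx + inf_norm ku m Du + 1)"
            using nD k1 by (simp add: algebra_simps)
          finally show "inf_norm ku m Du * \<kappa> * \<kappa>^11 \<le> \<kappa>^12 * (inf_norm kx n Dx + inf_norm ku m Du + 1)" .
        qed
        finally show "\<bar>gu n m H AK B K wbar Du (\<lambda>_. Ms t) 0 j - gu n m H AK B K wbar Du (histof Ms) (int t) j\<bar> \<le> E" .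
      qed
    qed
    show "let c2 = peval p [inf_norm kx n Dx, inf_norm ku m Du, \<kappa>, max (spec_norm n m B) 1, 1 / \<gamma>, wbar, G];
           eps2 = c2 * \<eta> * real n ^ 2 * sqrt (real m) * real H ^ 2
       in 0 < c2 \<and>
          (\<forall>t\<le>T.
             (\<forall>i<kx. \<bar>gx n m H (closed_loop m A B K) B wbar Dx (\<lambda>_. Ms t) 0 i
                       - gx n m H (closed_loop m A B K) B wbar Dx (histof Ms) (int t) i\<bar> \<le> eps2) \<and>
             (\<forall>j<ku. \<bar>gu n m H (closed_loop m A B K) B K wbar Du (\<lambda>_. Ms t) 0 j
                       - gu n m H (closed_loop m A B K) B K wbar Du (histof Ms) (int t) j\<bar> \<le> eps2))"
      unfolding Let_def using c2pos main unfolding c2_def E_def AK_def \<kappa>B_def by blast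
  qed
qed

end
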